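(* Let $k\ge0$ be an integer, $\rho\in\mathbb R$, and let $\kappa_{\mathbf a}$ be a positive semi-definite $k$-diagonal Dirichlet series kernel on $\mathbb H_\rho$ with coefficient matrix $\mathbf a=(a_{m,n})$. Then for every integer $n\ge1$ the analytic symbol $A_{n,\mathbf a}(s)=\sum_{m\ge1}a_{m,n}m^{-s}$ is a Dirichlet polynomial, and $\mathscr H_{\mathbf a}$ admits an orthonormal basis consisting of Dirichlet polynomials. In addition, if $\mathscr H_{\mathbf a}$ contains the space $\mathcal D[s]$ of all Dirichlet polynomials, then $\mathcal D[s]$ is dense in $\mathscr H_{\mathbf a}$.
   Context: $\mathbb H_\rho=\{\Re s>\rho\}$. $\kappa_{\mathbf a}(s,u)=\sum_{m,n\ge1}a_{m,n}m^{-s}n^{-\bar u}$ is a Dirichlet series kernel on $\mathbb H_\rho$ if $(s,u)\mapsto\kappa_{\mathbf a}(s,\bar u)$ is regularly convergent on $\mathbb H_\rho\times\mathbb H_\rho$ (the double series converges at each point and every row series and column series converges there). It is $k$-diagonal if $a_{m,n}=0$ whenever $|m-n|>k$. Positive semi-definite: all finite matrices $(\kappa_{\mathbf a}(s_i,s_j))$ are positive semi-definite. $\mathscr H_{\mathbf a}$ is the reproducing kernel Hilbert space on $\mathbb H_\rho$ with kernel $\kappa_{\mathbf a}$. A Dirichlet polynomial is a finite sum $\sum_{n=1}^Nc_nn^{-s}$. *)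

theory Defs
  imports "HOL-Analysis.Analysis"
begin

definition halfplane :: "real \<Rightarrow> complex set" where
  "halfplane \<rho> = {s. Re s > \<rho>}"

definition npow :: "nat \<Rightarrow> complex \<Rightarrow> complex" where
  "npow n s = of_nat n powr (- s)"

definition dpsum :: "(nat \<Rightarrow> nat \<Rightarrow> complex) \<Rightarrow> complex \<Rightarrow> complex \<Rightarrow> nat \<times> nat \<Rightarrow> complex" where
  "dpsum a s u = (\<lambda>(M, N). \<Sum>m=1..M. \<Sum>n=1..N. a m n * npow m s * npow n u)"

text \<open>Regular convergence of the double series at (s,u): the double series converges
  (rectangular partial sums converge as M,N \<rightarrow> \<infinity> jointly, i.e. in Pringsheim's sense),
  and every row series and every column series converges.\<close>
definition regularly_convergent_at ::
    "(nat \<Rightarrow> nat \<Rightarrow> complex) \<Rightarrow> complex \<Rightarrow> complex \<Rightarrow> bool" where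
  "regularly_convergent_at a s u \<longleftrightarrow>
     (\<exists>L. (dpsum a s u \<longlongrightarrow> L) (sequentially \<times>\<^sub>F sequentially)) \<and>
     (\<forall>m\<ge>1. convergent (\<lambda>N. \<Sum>n=1..N. a m n * npow m s * npow n u)) \<and>
     (\<forall>n\<ge>1. convergent (\<lambda>M. \<Sum>m=1..M. a m n * npow m s * npow n u))"

definition dkernel :: "(nat \<Rightarrow> nat \<Rightarrow> complex) \<Rightarrow> complex \<Rightarrow> complex \<Rightarrow> complex" where
  "dkernel a s u = Lim (sequentially \<times>\<^sub>F sequentially) (dpsum a s (cnj u))"

text \<open>kappa_a is a Dirichlet series kernel on H_rho: (s,u) \<mapsto> kappa_a(s, conj u)
  is regularly convergent on H_rho \<times> H_rho.\<close>
definition dirichlet_series_kernel :: "real \<Rightarrow> (nat \<Rightarrow> nat \<Rightarrow> complex) \<Rightarrow> bool" where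
  "dirichlet_series_kernel \<rho> a \<longleftrightarrow>
     (\<forall>s\<in>halfplane \<rho>. \<forall>u\<in>halfplane \<rho>. regularly_convergent_at a s u)"

definition k_diagonal :: "nat \<Rightarrow> (nat \<Rightarrow> nat \<Rightarrow> complex) \<Rightarrow> bool" where
  "k_diagonal k a \<longleftrightarrow> (\<forall>m n. \<bar>int m - int n\<bar> > int k \<longrightarrow> a m n = 0)"

definition psd_kernel :: "'a set \<Rightarrow> ('a \<Rightarrow> 'a \<Rightarrow> complex) \<Rightarrow> bool" where
  "psd_kernel \<Omega> K \<longleftrightarrow>
     (\<forall>(n::nat) (x::nat \<Rightarrow> 'a) (c::nat \<Rightarrow> complex). (\<forall>i<n. x i \<in> \<Omega>) \<longrightarrow>
        (let q = (\<Sum>i<n. \<Sum>j<n. cnj (c i) * c j * K (x i) (x j)) in Im q = 0 \<and> Re q \<ge> 0))"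

definition symbol :: "(nat \<Rightarrow> nat \<Rightarrow> complex) \<Rightarrow> nat \<Rightarrow> complex \<Rightarrow> complex" where
  "symbol a n s = (\<Sum>m. a (Suc m) n * npow (Suc m) s)"

definition dirichlet_poly_on :: "complex set \<Rightarrow> (complex \<Rightarrow> complex) \<Rightarrow> bool" where
  "dirichlet_poly_on \<Omega> f \<longleftrightarrow>
     (\<exists>N (c::nat \<Rightarrow> complex). \<forall>s\<in>\<Omega>. f s = (\<Sum>n=1..N. c n * npow n s))"

text \<open>Reproducing kernel Hilbert space of functions on \<Omega> (represented as functions
  vanishing outside \<Omega>) with inner product ip (linear in the first argument) and
  reproducing kernel K: f(w) = ip f K_w with K_w = K(.,w).\<close>
definition ipnorm :: "(('a \<Rightarrow> complex) \<Rightarrow> ('a \<Rightarrow> complex) \<Rightarrow> complex) \<Rightarrow> ('a \<Rightarrow> complex) \<Rightarrow> real" where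
  "ipnorm ip f = sqrt (Re (ip f f))"

definition kfun :: "'a set \<Rightarrow> ('a \<Rightarrow> 'a \<Rightarrow> complex) \<Rightarrow> 'a \<Rightarrow> 'a \<Rightarrow> complex" where
  "kfun \<Omega> K w = (\<lambda>s. if s \<in> \<Omega> then K s w else 0)"

definition rkhs :: "'a set \<Rightarrow> ('a \<Rightarrow> complex) set \<Rightarrow>
    (('a \<Rightarrow> complex) \<Rightarrow> ('a \<Rightarrow> complex) \<Rightarrow> complex) \<Rightarrow> ('a \<Rightarrow> 'a \<Rightarrow> complex) \<Rightarrow> bool" where
  "rkhs \<Omega> H ip K \<longleftrightarrow>
     (\<forall>f\<in>H. \<forall>x. x \<notin> \<Omega> \<longrightarrow> f x = 0) \<and>
     (\<lambda>x. 0) \<in> H \<and> (\<forall>f\<in>H. \<forall>g\<in>H. (\<lambda>x. f x + g x) \<in> H) \<and> (\<forall>f\<in>H. \<forall>c::complex. (\<lambda>x. c * f x) \<in> H) \<and>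
     (\<forall>f\<in>H. \<forall>g\<in>H. \<forall>h\<in>H. ip (\<lambda>x. f x + g x) h = ip f h + ip g h) \<and>
     (\<forall>f\<in>H. \<forall>g\<in>H. \<forall>c. ip (\<lambda>x. c * f x) g = c * ip f g) \<and>
     (\<forall>f\<in>H. \<forall>g\<in>H. ip f g = cnj (ip g f)) \<and>
     (\<forall>f\<in>H. Im (ip f f) = 0 \<and> Re (ip f f) \<ge> 0) \<and>
     (\<forall>f\<in>H. ip f f = 0 \<longrightarrow> f = (\<lambda>x. 0)) \<and>
     (\<forall>F. (\<forall>n. F n \<in> H) \<longrightarrow>
        (\<forall>e>0. \<exists>N. \<forall>m\<ge>N. \<forall>n\<ge>N. ipnorm ip (\<lambda>x. F m x - F n x) < e) \<longrightarrow>
        (\<exists>g\<in>H. (\<lambda>n. ipnorm ip (\<lambda>x. F n x - g x)) \<longlonglongrightarrow> 0)) \<and>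
     (\<forall>w\<in>\<Omega>. kfun \<Omega> K w \<in> H \<and> (\<forall>f\<in>H. f w = ip f (kfun \<Omega> K w)))"

definition fspan :: "('a \<Rightarrow> complex) set \<Rightarrow> ('a \<Rightarrow> complex) set" where
  "fspan B = {g. \<exists>S c. finite S \<and> S \<subseteq> B \<and> g = (\<lambda>x. \<Sum>e\<in>S. c e * e x)}"

definition orthonormal_basis :: "('a \<Rightarrow> complex) set \<Rightarrow>
    (('a \<Rightarrow> complex) \<Rightarrow> ('a \<Rightarrow> complex) \<Rightarrow> complex) \<Rightarrow> ('a \<Rightarrow> complex) set \<Rightarrow> bool" where
  "orthonormal_basis H ip B \<longleftrightarrow>
     B \<subseteq> H \<and> (\<forall>e\<in>B. ip e e = 1) \<and> (\<forall>e\<in>B. \<forall>e'\<in>B. e \<noteq> e' \<longrightarrow> ip e e' = 0) \<and>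
     (\<forall>f\<in>H. \<forall>\<epsilon>>0. \<exists>g\<in>fspan B. ipnorm ip (\<lambda>x. f x - g x) < \<epsilon>)"

end

theory Submission
  imports Defs
begin

locale rk =
  fixes \<Omega> :: "'a set" and H :: "('a \<Rightarrow> complex) set"
    and ip :: "('a \<Rightarrow> complex) \<Rightarrow> ('a \<Rightarrow> complex) \<Rightarrow> complex" and K :: "'a \<Rightarrow> 'a \<Rightarrow> complex"
  assumes R: "rkhs \<Omega> H ip K"
begin

lemma vanish: "f \<in> H \<Longrightarrow> x \<notin> \<Omega> \<Longrightarrow> f x = 0"
  using R unfolding rkhs_def by blast
lemma zero_H: "(\<lambda>x. 0) \<in> H"
  using R unfolding rkhs_def by blast
lemma add_H: "f \<in> H \<Longrightarrow> g \<in> H \<Longrightarrow> (\<lambda>x. f x + g x) \<in> H"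
  using R unfolding rkhs_def by blast
lemma scale_H: "f \<in> H \<Longrightarrow> (\<lambda>x. c * f x) \<in> H"
  using R unfolding rkhs_def by blast
lemma ip_add1: "f \<in> H \<Longrightarrow> g \<in> H \<Longrightarrow> h \<in> H \<Longrightarrow> ip (\<lambda>x. f x + g x) h = ip f h + ip g h"
  using R unfolding rkhs_def by blast
lemma ip_scale1: "f \<in> H \<Longrightarrow> g \<in> H \<Longrightarrow> ip (\<lambda>x. c * f x) g = c * ip f g"
  using R unfolding rkhs_def by blast
lemma herm: "f \<in> H \<Longrightarrow> g \<in> H \<Longrightarrow> ip f g = cnj (ip g f)"
  using R unfolding rkhs_def by blast
lemma ip_pos: "f \<in> H \<Longrightarrow> Im (ip f f) = 0 \<and> Re (ip f f) \<ge> 0"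
  using R unfolding rkhs_def by blast
lemma ip_def0: "f \<in> H \<Longrightarrow> ip f f = 0 \<Longrightarrow> f = (\<lambda>x. 0)"
  using R unfolding rkhs_def by blast
lemma complete: "(\<And>n. F n \<in> H) \<Longrightarrow>
        (\<forall>e>0. \<exists>N. \<forall>m\<ge>N. \<forall>n\<ge>N. ipnorm ip (\<lambda>x. F m x - F n x) < e) \<Longrightarrow>
        (\<exists>g\<in>H. (\<lambda>n. ipnorm ip (\<lambda>x. F n x - g x)) \<longlonglongrightarrow> 0)"
  using R unfolding rkhs_def by blast
lemma kfun_H: "w \<in> \<Omega> \<Longrightarrow> kfun \<Omega> K w \<in> H"
  using R unfolding rkhs_def by blast
lemma repro: "w \<in> \<Omega> \<Longrightarrow> f \<in> H \<Longrightarrow> f w = ip f (kfun \<Omega> K w)"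
  using R unfolding rkhs_def by blast

lemma diff_H: "f \<in> H \<Longrightarrow> g \<in> H \<Longrightarrow> (\<lambda>x. f x - g x) \<in> H"
proof -
  assume a: "f \<in> H" "g \<in> H"
  have "(\<lambda>x. f x + (-1) * g x) \<in> H" using a by (intro add_H scale_H)
  then show ?thesis by simp
qed

lemma sum_H: "finite I \<Longrightarrow> (\<And>i. i \<in> I \<Longrightarrow> f i \<in> H) \<Longrightarrow> (\<lambda>x. \<Sum>i\<in>I. c i * f i x) \<in> H"
proof (induction I rule: finite_induct)
  case empty then show ?case using zero_H by simp
next
  case (insert j I)
  have "(\<lambda>x. c j * f j x + (\<Sum>i\<in>I. c i * f i x)) \<in> H"
    using insert by (intro add_H scale_H) auto
  then show ?case using insert by simp
qed

lemma ip_scale2: "f \<in> H \<Longrightarrow> g \<in> H \<Longrightarrow> ip f (\<lambda>x. c * g x) = cnj c * ip f g"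
proof -
  assume a: "f \<in> H" "g \<in> H"
  have "ip f (\<lambda>x. c * g x) = cnj (ip (\<lambda>x. c * g x) f)" using a scale_H herm by blast
  also have "\<dots> = cnj (c * ip g f)" using a ip_scale1 by simp
  also have "\<dots> = cnj c * ip f g" using a herm[of g f] by simp
  finally show ?thesis .
qed
lemma ip_add2: "f \<in> H \<Longrightarrow> g \<in> H \<Longrightarrow> h \<in> H \<Longrightarrow> ip h (\<lambda>x. f x + g x) = ip h f + ip h g"
proof -
  assume a: "f \<in> H" "g \<in> H" "h \<in> H"
  have "ip h (\<lambda>x. f x + g x) = cnj (ip (\<lambda>x. f x + g x) h)" using a add_H herm by blast
  also have "\<dots> = cnj (ip f h + ip g h)" using a ip_add1 by simp
  also have "\<dots> = ip h f + ip h g" using a herm[of f h] herm[of g h] by simp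
  finally show ?thesis .
qed
lemma ip_diff1: "f \<in> H \<Longrightarrow> g \<in> H \<Longrightarrow> h \<in> H \<Longrightarrow> ip (\<lambda>x. f x - g x) h = ip f h - ip g h"
proof -
  assume a: "f \<in> H" "g \<in> H" "h \<in> H"
  have "ip (\<lambda>x. f x + (-1) * g x) h = ip f h + ip (\<lambda>x. (-1) * g x) h"
    using a by (intro ip_add1 scale_H)
  also have "ip (\<lambda>x. (-1) * g x) h = (-1) * ip g h" using a by (intro ip_scale1)
  finally show ?thesis by simp
qed
lemma ip_diff2: "f \<in> H \<Longrightarrow> g \<in> H \<Longrightarrow> h \<in> H \<Longrightarrow> ip h (\<lambda>x. f x - g x) = ip h f - ip h g"
proof -
  assume a: "f \<in> H" "g \<in> H" "h \<in> H"
  have "ip h (\<lambda>x. f x - g x) = cnj (ip (\<lambda>x. f x - g x) h)" using a diff_H herm by blast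
  also have "\<dots> = cnj (ip f h - ip g h)" using a ip_diff1 by simp
  also have "\<dots> = ip h f - ip h g" using a herm[of f h] herm[of g h] by simp
  finally show ?thesis .
qed
lemma ip_zero1: "f \<in> H \<Longrightarrow> ip (\<lambda>x. 0) f = 0"
  using ip_scale1[of "\<lambda>x. 0" f 0] zero_H by simp
lemma ip_zero2: "f \<in> H \<Longrightarrow> ip f (\<lambda>x. 0) = 0"
  using herm[of f "\<lambda>x. 0"] ip_zero1[of f] zero_H by simp

lemma ip_sum1: "finite I \<Longrightarrow> (\<And>i. i \<in> I \<Longrightarrow> f i \<in> H) \<Longrightarrow> g \<in> H \<Longrightarrow>
   ip (\<lambda>x. \<Sum>i\<in>I. c i * f i x) g = (\<Sum>i\<in>I. c i * ip (f i) g)"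
proof (induction I rule: finite_induct)
  case empty then show ?case using ip_zero1 by simp
next
  case (insert j I)
  have "ip (\<lambda>x. c j * f j x + (\<Sum>i\<in>I. c i * f i x)) g = ip (\<lambda>x. c j * f j x) g + ip (\<lambda>x. \<Sum>i\<in>I. c i * f i x) g"
    using insert by (intro ip_add1 scale_H sum_H) auto
  then show ?case using insert by (simp add: ip_scale1)
qed

lemma ip_sum2: "finite I \<Longrightarrow> (\<And>i. i \<in> I \<Longrightarrow> f i \<in> H) \<Longrightarrow> g \<in> H \<Longrightarrow>
   ip g (\<lambda>x. \<Sum>i\<in>I. c i * f i x) = (\<Sum>i\<in>I. cnj (c i) * ip g (f i))"
proof -
  assume a: "finite I" "\<And>i. i \<in> I \<Longrightarrow> f i \<in> H" "g \<in> H"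
  have "ip g (\<lambda>x. \<Sum>i\<in>I. c i * f i x) = cnj (ip (\<lambda>x. \<Sum>i\<in>I. c i * f i x) g)"
    using a by (intro herm sum_H) auto
  also have "\<dots> = cnj (\<Sum>i\<in>I. c i * ip (f i) g)" using a by (simp add: ip_sum1)
  also have "\<dots> = (\<Sum>i\<in>I. cnj (c i) * ip g (f i))" using a by (simp add: herm[of g])
  finally show ?thesis .
qed

lemma ip_self: assumes "f \<in> H" shows "ip f f = complex_of_real ((ipnorm ip f)\<^sup>2)"
proof -
  have i: "Im (ip f f) = 0" and r: "Re (ip f f) \<ge> 0" using ip_pos assms by blast+
  have "(sqrt (Re (ip f f)))\<^sup>2 = Re (ip f f)" by (rule real_sqrt_pow2[OF r])
  then show ?thesis unfolding ipnorm_def using i by (simp add: complex_eq_iff)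
qed

lemma ipnorm_nonneg: "f \<in> H \<Longrightarrow> ipnorm ip f \<ge> 0" unfolding ipnorm_def using ip_pos by simp

lemma CS: assumes "f \<in> H" "g \<in> H" shows "norm (ip f g) \<le> ipnorm ip f * ipnorm ip g"
proof (cases "ip g g = 0")
  case True
  then have "g = (\<lambda>x. 0)" using assms ip_def0 by blast
  then show ?thesis using assms ip_zero2 ipnorm_nonneg[of f] ipnorm_nonneg[of g] by (simp add: mult_nonneg_nonneg)
next
  case False
  define x where "x = ip f g"
  define \<gamma> where "\<gamma> = (ipnorm ip g)\<^sup>2"
  have gg: "ip g g = of_real \<gamma>" using ip_self assms unfolding \<gamma>_def by simp
  have gpos: "\<gamma> > 0" using False gg ipnorm_nonneg[OF assms(2)] unfolding \<gamma>_def by (simp add: power2_eq_square) 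
  define c where "c = x / of_real \<gamma>"
  have mem: "(\<lambda>y. c * g y) \<in> H" using assms by (intro scale_H)
  have "ip (\<lambda>y. f y - c * g y) (\<lambda>y. f y - c * g y) =
     ip f f - cnj c * ip f g - c * ip g f + c * cnj c * ip g g"
  proof -
    have d: "(\<lambda>y. f y - c * g y) \<in> H" using assms(1) mem by (rule diff_H)
    have "ip (\<lambda>y. f y - c * g y) (\<lambda>y. f y - c * g y) = ip f (\<lambda>y. f y - c * g y) - ip (\<lambda>y. c * g y) (\<lambda>y. f y - c * g y)"
      using assms(1) mem d by (rule ip_diff1)
    also have "ip f (\<lambda>y. f y - c * g y) = ip f f - ip f (\<lambda>y. c * g y)" using assms(1) mem assms(1) by (rule ip_diff2)
    also have "ip (\<lambda>y. c * g y) (\<lambda>y. f y - c * g y) = c * ip g (\<lambda>y. f y - c * g y)" using assms(2) d by (rule ip_scale1)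
    also have "ip g (\<lambda>y. f y - c * g y) = ip g f - ip g (\<lambda>y. c * g y)" using assms(1) mem assms(2) by (rule ip_diff2)
    also have "ip f (\<lambda>y. c * g y) = cnj c * ip f g" using assms by (rule ip_scale2)
    also have "ip g (\<lambda>y. c * g y) = cnj c * ip g g" using assms(2) assms(2) by (rule ip_scale2)
    finally show ?thesis by (simp add: algebra_simps)
  qed
  also have "\<dots> = ip f f - cnj c * x - c * cnj x + c * cnj c * of_real \<gamma>"
    using assms herm[of g f] gg unfolding x_def by simp
  also have "\<dots> = ip f f - of_real ((norm x)\<^sup>2 / \<gamma>)"
  proof -
    have n: "x * cnj x = of_real ((norm x)\<^sup>2)" by (rule complex_norm_square[symmetric])
    have g0: "complex_of_real \<gamma> \<noteq> 0" using gpos by simp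
    have "cnj c * x = x * cnj x / of_real \<gamma>" unfolding c_def by simp
    moreover have "c * cnj x = x * cnj x / of_real \<gamma>" unfolding c_def by simp
    moreover have "c * cnj c * of_real \<gamma> = x * cnj x / of_real \<gamma>" unfolding c_def using g0 by simp
    ultimately show ?thesis using n by simp
  qed
  finally have e: "ip (\<lambda>y. f y - c * g y) (\<lambda>y. f y - c * g y) = ip f f - of_real ((norm x)\<^sup>2 / \<gamma>)" .
  have "Re (ip (\<lambda>y. f y - c * g y) (\<lambda>y. f y - c * g y)) \<ge> 0"
    using ip_pos diff_H assms mem by blast
  then have "(norm x)\<^sup>2 / \<gamma> \<le> (ipnorm ip f)\<^sup>2" using e ip_self[OF assms(1)] by simp
  then have "(norm x)\<^sup>2 \<le> (ipnorm ip f)\<^sup>2 * (ipnorm ip g)\<^sup>2" using gpos unfolding \<gamma>_def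
    by (simp add: divide_le_eq)
  then have "(norm x)\<^sup>2 \<le> (ipnorm ip f * ipnorm ip g)\<^sup>2" by (simp add: power_mult_distrib)
  then show ?thesis unfolding x_def
    using ipnorm_nonneg[OF assms(1)] ipnorm_nonneg[OF assms(2)] power2_le_imp_le mult_nonneg_nonneg by blast
qed

lemma ip_diff_bound: assumes "f \<in> H" "g \<in> H" "h \<in> H"
  shows "norm (ip f h - ip g h) \<le> ipnorm ip (\<lambda>x. f x - g x) * ipnorm ip h"
  using CS[of "\<lambda>x. f x - g x" h] assms by (simp add: ip_diff1 diff_H)

lemma ip_cont1: assumes "\<And>n. F n \<in> H" "g \<in> H" "h \<in> H"
   "(\<lambda>n. ipnorm ip (\<lambda>x. F n x - g x)) \<longlonglongrightarrow> 0"
 shows "(\<lambda>n. ip (F n) h) \<longlonglongrightarrow> ip g h"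
proof -
  have "(\<lambda>n. ipnorm ip (\<lambda>x. F n x - g x) * ipnorm ip h) \<longlonglongrightarrow> 0 * ipnorm ip h"
    by (intro tendsto_intros assms)
  then have "(\<lambda>n. ipnorm ip (\<lambda>x. F n x - g x) * ipnorm ip h) \<longlonglongrightarrow> 0" by simp
  then have "(\<lambda>n. ip (F n) h - ip g h) \<longlonglongrightarrow> 0"
    by (rule Lim_null_comparison[rotated]) (use ip_diff_bound assms in auto)
  then show ?thesis by (simp add: LIM_zero_iff)
qed

lemma ip_cont2: assumes "\<And>n. F n \<in> H" "g \<in> H" "h \<in> H"
   "(\<lambda>n. ipnorm ip (\<lambda>x. F n x - g x)) \<longlonglongrightarrow> 0"
 shows "(\<lambda>n. ip h (F n)) \<longlonglongrightarrow> ip h g"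
proof -
  have "(\<lambda>n. cnj (ip (F n) h)) \<longlonglongrightarrow> cnj (ip g h)"
    by (intro tendsto_cnj ip_cont1 assms)
  then show ?thesis using assms by (simp add: herm[of h])
qed

lemma ipnorm_sq_expand: assumes "f \<in> H" "g \<in> H"
  shows "(ipnorm ip (\<lambda>x. f x - g x))\<^sup>2 = Re (ip f f - ip f g - ip g f + ip g g)"
proof -
  have "(ipnorm ip (\<lambda>x. f x - g x))\<^sup>2 = Re (ip (\<lambda>x. f x - g x) (\<lambda>x. f x - g x))"
    using ip_self[of "\<lambda>x. f x - g x"] diff_H assms by (metis Re_complex_of_real)
  also have "\<dots> = Re (ip f f - ip f g - ip g f + ip g g)"
    using assms by (simp add: ip_diff1 ip_diff2 diff_H)
  finally show ?thesis .
qed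

lemma ipnorm_tendsto0: assumes "\<And>n. F n \<in> H" "g \<in> H"
  "(\<lambda>n. Re (ip (F n) (F n) - ip (F n) g - ip g (F n) + ip g g)) \<longlonglongrightarrow> 0"
  shows "(\<lambda>n. ipnorm ip (\<lambda>x. F n x - g x)) \<longlonglongrightarrow> 0"
proof -
  have "(\<lambda>n. sqrt ((ipnorm ip (\<lambda>x. F n x - g x))\<^sup>2)) \<longlonglongrightarrow> sqrt 0"
    using assms by (intro tendsto_real_sqrt) (simp add: ipnorm_sq_expand)
  then show ?thesis using ipnorm_nonneg diff_H assms by simp
qed

end

locale rkv = rk +
  fixes v :: "nat \<Rightarrow> 'a \<Rightarrow> complex"
  assumes vH: "v n \<in> H"
begin

definition gsw :: "(nat \<Rightarrow> 'a \<Rightarrow> complex) \<Rightarrow> nat \<Rightarrow> 'a \<Rightarrow> complex" where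
  "gsw U n = (\<lambda>x. v n x - (\<Sum>j<n. ip (v n) (U j) * U j x))"
definition gsn :: "('a \<Rightarrow> complex) \<Rightarrow> 'a \<Rightarrow> complex" where
  "gsn w = (if ip w w = 0 then (\<lambda>x. 0) else (\<lambda>x. complex_of_real (1 / ipnorm ip w) * w x))"
primrec UU :: "nat \<Rightarrow> nat \<Rightarrow> 'a \<Rightarrow> complex" where
  "UU 0 = (\<lambda>j x. 0)"
| "UU (Suc n) = (UU n)(n := gsn (gsw (UU n) n))"
definition u :: "nat \<Rightarrow> 'a \<Rightarrow> complex" where "u n = UU (Suc n) n"

lemma UU_u: "j < m \<Longrightarrow> UU m j = u j"
proof (induction m)
  case 0 then show ?case by simp
next
  case (Suc m)
  then show ?case unfolding u_def by (cases "j = m") auto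
qed

lemma u_rec: "u n = gsn (gsw u n)"
proof -
  have "gsw (UU n) n = gsw u n" unfolding gsw_def using UU_u by (intro ext) simp
  then show ?thesis unfolding u_def by simp
qed

lemma gs_main: "u n \<in> H \<and> (u n = (\<lambda>x. 0) \<or> ip (u n) (u n) = 1) \<and> (\<forall>i<n. ip (u n) (u i) = 0)"
proof (induction n rule: less_induct)
  case (less n)
  have uH: "\<And>j. j < n \<Longrightarrow> u j \<in> H" using less by blast
  have orth: "\<And>i j. i < n \<Longrightarrow> j < n \<Longrightarrow> i \<noteq> j \<Longrightarrow> ip (u j) (u i) = 0"
  proof -
    fix i j assume ij: "i < n" "j < n" "i \<noteq> j"
    show "ip (u j) (u i) = 0"
    proof (cases "i < j")
      case True then show ?thesis using less ij by blast
    next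
      case False then have "j < i" using ij by simp
      then have "ip (u i) (u j) = 0" using less ij by blast
      then show ?thesis using herm uH ij by (metis complex_cnj_zero)
    qed
  qed
  define W where "W = gsw u n"
  have WH: "W \<in> H" unfolding W_def gsw_def using vH uH by (intro diff_H sum_H) auto
  have Wo: "ip W (u i) = 0" if i: "i < n" for i
  proof -
    have "ip W (u i) = ip (v n) (u i) - ip (\<lambda>x. \<Sum>j<n. ip (v n) (u j) * u j x) (u i)"
      unfolding W_def gsw_def using vH uH i by (intro ip_diff1 sum_H) auto
    also have "ip (\<lambda>x. \<Sum>j<n. ip (v n) (u j) * u j x) (u i) = (\<Sum>j<n. ip (v n) (u j) * ip (u j) (u i))"
      using uH i by (intro ip_sum1) auto
    also have "\<dots> = (\<Sum>j<n. if j = i then ip (v n) (u i) else 0)"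
    proof (rule sum.cong)
      fix j assume j: "j \<in> {..<n}"
      show "ip (v n) (u j) * ip (u j) (u i) = (if j = i then ip (v n) (u i) else 0)"
      proof (cases "j = i")
        case True
        have "u i = (\<lambda>x. 0) \<or> ip (u i) (u i) = 1" using less i by blast
        then show ?thesis using True ip_zero2 vH by auto
      next
        case False then show ?thesis using orth[of i j] i j by simp
      qed
    qed simp
    also have "\<dots> = ip (v n) (u i)" using i by simp
    finally show ?thesis by simp
  qed
  have un: "u n = gsn W" unfolding W_def by (rule u_rec)
  show ?case
  proof (cases "ip W W = 0")
    case True
    then have "u n = (\<lambda>x. 0)" using un unfolding gsn_def by simp
    then show ?thesis using zero_H ip_zero1 uH by auto
  next
    case False
    define c where "c = complex_of_real (1 / ipnorm ip W)"
    have u_eq: "u n = (\<lambda>x. c * W x)" using un False unfolding gsn_def c_def by simp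
    have uH': "u n \<in> H" using u_eq WH scale_H by simp
    have nW: "ipnorm ip W \<noteq> 0" using False ip_self[OF WH] by auto
    have "ip (u n) (u n) = c * cnj c * ip W W" using u_eq WH by (simp add: ip_scale1 ip_scale2 scale_H)
    also have "\<dots> = 1" using nW ip_self[OF WH] unfolding c_def by (simp add: power2_eq_square)
    finally have one: "ip (u n) (u n) = 1" .
    have "\<forall>i<n. ip (u n) (u i) = 0" using u_eq WH Wo uH by (simp add: ip_scale1)
    then show ?thesis using one uH' by blast
  qed
qed

lemma uH: "u n \<in> H" using gs_main by blast
lemma u_unit: "u n \<noteq> (\<lambda>x. 0) \<Longrightarrow> ip (u n) (u n) = 1" using gs_main by blast
lemma u_orth: "i \<noteq> j \<Longrightarrow> ip (u i) (u j) = 0"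
proof (cases "j < i")
  case True then show ?thesis using gs_main by blast
next
  case False
  assume "i \<noteq> j" then have "i < j" using False by simp
  then have "ip (u j) (u i) = 0" using gs_main by blast
  then show ?thesis using herm uH by (metis complex_cnj_zero)
qed

lemma u_ip: "ip (u i) (u j) = (if i = j \<and> u i \<noteq> (\<lambda>x. 0) then 1 else 0)"
  using u_orth u_unit ip_zero1 ip_zero2 uH by auto

lemma v_repr: "v n = (\<lambda>x. \<Sum>j<Suc n. ip (v n) (u j) * u j x)"
proof -
  define W where "W = gsw u n"
  define S where "S = (\<lambda>x. \<Sum>j<n. ip (v n) (u j) * u j x)"
  have WH: "W \<in> H" unfolding W_def gsw_def using vH uH by (intro diff_H sum_H) auto
  have SH: "S \<in> H" unfolding S_def using uH by (intro sum_H) auto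
  have vW: "v n = (\<lambda>x. W x + S x)" unfolding W_def gsw_def S_def by simp
  have un: "u n = gsn W" unfolding W_def by (rule u_rec)
  show ?thesis
  proof (cases "ip W W = 0")
    case True
    then have W0: "W = (\<lambda>x. 0)" using ip_def0 WH by blast
    have u0: "u n = (\<lambda>x. 0)" using un True unfolding gsn_def by simp
    have e1: "v n = S" using vW W0 by simp
    have "v n = (\<lambda>x. \<Sum>j<n. ip (v n) (u j) * u j x)" by (rule trans[OF e1 S_def])
    also have "\<dots> = (\<lambda>x. \<Sum>j<Suc n. ip (v n) (u j) * u j x)" using u0 by simp
    finally show ?thesis .
  next
    case False
    define c where "c = complex_of_real (1 / ipnorm ip W)"
    have u_eq: "u n = (\<lambda>x. c * W x)" using un False unfolding gsn_def c_def by simp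
    have nW: "ipnorm ip W \<noteq> 0" using False ip_self[OF WH] by auto
    have "ip (v n) (u n) = ip (\<lambda>x. W x + S x) (u n)" using vW by simp
    also have "\<dots> = ip W (u n) + ip S (u n)" using WH SH uH by (intro ip_add1)
    also have "ip S (u n) = (\<Sum>j<n. ip (v n) (u j) * ip (u j) (u n))"
      unfolding S_def using uH by (intro ip_sum1) auto
    also have "\<dots> = 0" using u_orth by simp
    also have "ip W (u n) = cnj c * ip W W" using u_eq WH by (simp add: ip_scale2)
    also have "\<dots> = complex_of_real (ipnorm ip W)" using ip_self[OF WH] nW unfolding c_def
      by (simp add: power2_eq_square)
    finally have cv: "ip (v n) (u n) = complex_of_real (ipnorm ip W)" by simp
    have "\<And>x. ip (v n) (u n) * u n x = W x" using cv u_eq nW unfolding c_def by simp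
    then show ?thesis using vW unfolding S_def by (simp add: add.commute)
  qed
qed

lemma u_closed:
  assumes Q0: "Q (\<lambda>x. 0)" and Qadd: "\<And>f g. Q f \<Longrightarrow> Q g \<Longrightarrow> Q (\<lambda>x. f x + g x)"
    and Qsc: "\<And>f c. Q f \<Longrightarrow> Q (\<lambda>x. c * f x)" and Qv: "\<And>n. Q (v n)"
  shows "Q (u n)"
proof (induction n rule: less_induct)
  case (less n)
  have Qsum: "finite I \<Longrightarrow> (\<forall>i\<in>I. Q (f i)) \<Longrightarrow> Q (\<lambda>x. \<Sum>i\<in>I. c i * f i x)" for I f c
  proof (induction I rule: finite_induct)
    case empty then show ?case using Q0 by simp
  next
    case (insert j I)
    then have "Q (\<lambda>x. c j * f j x + (\<Sum>i\<in>I. c i * f i x))" by (intro Qadd Qsc) auto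
    then show ?case using insert by simp
  qed
  have "Q (\<lambda>x. v n x + (-1) * (\<Sum>j<n. ip (v n) (u j) * u j x))"
    using less Qsum[of "{..<n}" u] by (intro Qadd Qsc Qv) auto
  then have QW: "Q (gsw u n)" unfolding gsw_def by simp
  have QS: "Q (\<lambda>x. complex_of_real (1 / ipnorm ip (gsw u n)) * gsw u n x)" by (rule Qsc[OF QW])
  show ?case
  proof (cases "ip (gsw u n) (gsw u n) = 0")
    case True then show ?thesis using Q0 u_rec[of n] unfolding gsn_def by simp
  next
    case False then show ?thesis using QS u_rec[of n] unfolding gsn_def by simp
  qed
qed

end

context rk
begin

lemma ip_diff_self: assumes "a \<in> H" "b \<in> H"
  shows "ip (\<lambda>x. a x - b x) (\<lambda>x. a x - b x) = ip a a - ip a b - ip b a + ip b b"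
  using assms by (simp add: ip_diff1 ip_diff2 diff_H)

lemma ipnorm_sym: assumes "a \<in> H" "b \<in> H"
  shows "ipnorm ip (\<lambda>x. a x - b x) = ipnorm ip (\<lambda>x. b x - a x)"
proof -
  have "ip (\<lambda>x. a x - b x) (\<lambda>x. a x - b x) = ip (\<lambda>x. b x - a x) (\<lambda>x. b x - a x)"
    by (simp only: ip_diff_self[OF assms] ip_diff_self[OF assms(2,1)]) (simp add: algebra_simps)
  then show ?thesis unfolding ipnorm_def by simp
qed

lemma ip_cdiff: assumes "A \<in> H" "B \<in> H" "C \<in> H" "D \<in> H"
  shows "ip (\<lambda>x. c * (A x - B x)) (\<lambda>x. d * (C x - D x)) = c * cnj d * (ip A C - ip A D - ip B C + ip B D)"
proof -
  have ab: "(\<lambda>x. A x - B x) \<in> H" and cd: "(\<lambda>x. C x - D x) \<in> H" using assms by (auto intro: diff_H)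
  have "ip (\<lambda>x. c * (A x - B x)) (\<lambda>x. d * (C x - D x)) = c * ip (\<lambda>x. A x - B x) (\<lambda>x. d * (C x - D x))"
    using ab cd scale_H by (intro ip_scale1) auto
  also have "ip (\<lambda>x. A x - B x) (\<lambda>x. d * (C x - D x)) = cnj d * ip (\<lambda>x. A x - B x) (\<lambda>x. C x - D x)"
    using ab cd by (intro ip_scale2)
  also have "ip (\<lambda>x. A x - B x) (\<lambda>x. C x - D x) = ip A (\<lambda>x. C x - D x) - ip B (\<lambda>x. C x - D x)"
    using assms cd by (intro ip_diff1)
  also have "ip A (\<lambda>x. C x - D x) = ip A C - ip A D" using assms by (intro ip_diff2)
  also have "ip B (\<lambda>x. C x - D x) = ip B C - ip B D" using assms by (intro ip_diff2)
  finally show ?thesis by (simp add: algebra_simps)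
qed

end

context rkv
begin

lemma density:
  assumes tot: "\<forall>f\<in>H. (\<forall>n. ip f (v n) = 0) \<longrightarrow> f = (\<lambda>x. 0)"
    and f: "f \<in> H" and e: "\<epsilon> > 0"
  shows "\<exists>N. ipnorm ip (\<lambda>x. f x - (\<Sum>j<N. ip f (u j) * u j x)) < \<epsilon>"
proof -
  define c where "c j = ip f (u j)" for j
  define P where "P N = (\<lambda>x. \<Sum>j<N. c j * u j x)" for N
  define S where "S N = (\<Sum>i<N. (norm (c i))\<^sup>2)" for N
  have PH: "P N \<in> H" for N unfolding P_def using uH by (intro sum_H) auto
  have cz: "u j = (\<lambda>x. 0) \<Longrightarrow> c j = 0" for j unfolding c_def using ip_zero2 f by simp
  have Pu: "ip (P N) (u i) = (if i < N then c i else 0)" for N i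
  proof -
    have "ip (P N) (u i) = (\<Sum>j<N. c j * ip (u j) (u i))" unfolding P_def using uH by (intro ip_sum1) auto
    also have "\<dots> = (\<Sum>j<N. if j = i then (if u i \<noteq> (\<lambda>x. 0) then c i else 0) else 0)"
      by (intro sum.cong) (auto simp: u_ip)
    also have "\<dots> = (if i < N then c i else 0)" using cz by auto
    finally show ?thesis .
  qed
  have cc: "cnj (c i) * c i = complex_of_real ((norm (c i))\<^sup>2)" for i
    using complex_norm_square[of "c i"] by (simp add: mult.commute)
  have PP: "ip (P N) (P M) = complex_of_real (S (min N M))" for N M
  proof -
    have "ip (P N) (P M) = (\<Sum>i<M. cnj (c i) * ip (P N) (u i))" unfolding P_def[of M]
      using uH PH by (intro ip_sum2) auto
    also have "\<dots> = (\<Sum>i<M. if i < N then complex_of_real ((norm (c i))\<^sup>2) else 0)"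
      using Pu cc by (intro sum.cong) auto
    also have "\<dots> = (\<Sum>i\<in>{i\<in>{..<M}. i < N}. complex_of_real ((norm (c i))\<^sup>2))"
      by (rule sum.inter_filter[symmetric]) simp
    also have "{i\<in>{..<M}. i < N} = {..<min N M}" by auto
    finally show ?thesis unfolding S_def by simp
  qed
  have fP: "ip f (P N) = complex_of_real (S N)" for N
  proof -
    have "ip f (P N) = (\<Sum>i<N. cnj (c i) * ip f (u i))" unfolding P_def
      using uH f by (intro ip_sum2) auto
    also have "\<dots> = (\<Sum>i<N. complex_of_real ((norm (c i))\<^sup>2))" using cc unfolding c_def by simp
    finally show ?thesis unfolding S_def by simp
  qed
  have Pf: "ip (P N) f = complex_of_real (S N)" for N
    using herm[OF PH f] fP by simp
  have bess: "S N \<le> Re (ip f f)" for N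
  proof -
    have "(ipnorm ip (\<lambda>x. f x - P N x))\<^sup>2 = Re (ip f f - ip f (P N) - ip (P N) f + ip (P N) (P N))"
      using f PH by (rule ipnorm_sq_expand)
    also have "\<dots> = Re (ip f f) - S N" using fP Pf PP by simp
    finally show ?thesis by (metis diff_ge_0_iff_ge zero_le_power2)
  qed
  have summ: "summable (\<lambda>i. (norm (c i))\<^sup>2)"
    by (rule summableI_nonneg_bounded[where x="Re (ip f f)"]) (use bess S_def in auto)
  have "(\<lambda>N. S N) \<longlonglongrightarrow> suminf (\<lambda>i. (norm (c i))\<^sup>2)" unfolding S_def by (rule summable_LIMSEQ[OF summ])
  then have CS: "Cauchy S" by (rule LIMSEQ_imp_Cauchy)
  have Smono: "N \<le> M \<Longrightarrow> S N \<le> S M" for N M unfolding S_def by (intro sum_mono2) auto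
  have PPn: "(ipnorm ip (\<lambda>x. P N x - P M x))\<^sup>2 = \<bar>S N - S M\<bar>" for N M
  proof -
    have "(ipnorm ip (\<lambda>x. P N x - P M x))\<^sup>2 = Re (ip (P N) (P N) - ip (P N) (P M) - ip (P M) (P N) + ip (P M) (P M))"
      using PH[of N] PH[of M] by (rule ipnorm_sq_expand)
    also have "\<dots> = S N + S M - 2 * S (min N M)" using PP by (simp add: min.commute)
    also have "\<dots> = \<bar>S N - S M\<bar>" using Smono[of N M] Smono[of M N] by (cases "N \<le> M") (auto simp: min_def)
    finally show ?thesis .
  qed
  have Pcauchy: "\<forall>e>0. \<exists>N. \<forall>m\<ge>N. \<forall>n\<ge>N. ipnorm ip (\<lambda>x. P m x - P n x) < e"
  proof (intro allI impI)
    fix e :: real assume e: "e > 0"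
    obtain N where N: "\<forall>m\<ge>N. \<forall>n\<ge>N. norm (S m - S n) < e\<^sup>2" using CauchyD[OF CS, of "e\<^sup>2"] e by auto
    show "\<exists>N. \<forall>m\<ge>N. \<forall>n\<ge>N. ipnorm ip (\<lambda>x. P m x - P n x) < e"
    proof (intro exI allI impI)
      fix m n assume "m \<ge> N" "n \<ge> N"
      then have "(ipnorm ip (\<lambda>x. P m x - P n x))\<^sup>2 < e\<^sup>2" using N PPn by auto
      then show "ipnorm ip (\<lambda>x. P m x - P n x) < e" using e by (simp add: power_less_imp_less_base)
    qed
  qed
  obtain h where hH: "h \<in> H" and hlim: "(\<lambda>n. ipnorm ip (\<lambda>x. P n x - h x)) \<longlonglongrightarrow> 0"
    using complete[OF PH Pcauchy] by blast
  have hu: "ip h (u i) = c i" for i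
  proof -
    have l1: "(\<lambda>N. ip (P N) (u i)) \<longlonglongrightarrow> ip h (u i)" using PH hH uH hlim by (intro ip_cont1)
    then have "(\<lambda>N. ip (P (N + Suc i)) (u i)) \<longlonglongrightarrow> ip h (u i)" by (rule LIMSEQ_ignore_initial_segment)
    moreover have "(\<lambda>N. ip (P (N + Suc i)) (u i)) = (\<lambda>N. c i)" using Pu by auto
    ultimately have "(\<lambda>N. c i) \<longlonglongrightarrow> ip h (u i)" by simp
    then show ?thesis using LIMSEQ_unique tendsto_const by blast
  qed
  have dH: "(\<lambda>x. f x - h x) \<in> H" using f hH by (rule diff_H)
  have du: "ip (\<lambda>x. f x - h x) (u i) = 0" for i using f hH uH hu unfolding c_def by (simp add: ip_diff1)
  have dv: "ip (\<lambda>x. f x - h x) (v n) = 0" for n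
  proof -
    have "ip (\<lambda>x. f x - h x) (v n) = ip (\<lambda>x. f x - h x) (\<lambda>x. \<Sum>j<Suc n. ip (v n) (u j) * u j x)"
      by (rule arg_cong[OF v_repr])
    also have "\<dots> = (\<Sum>j<Suc n. cnj (ip (v n) (u j)) * ip (\<lambda>x. f x - h x) (u j))"
      using uH dH by (intro ip_sum2) auto
    also have "\<dots> = 0" using du by simp
    finally show ?thesis .
  qed
  have "(\<lambda>x. f x - h x) = (\<lambda>x. 0)" using tot dH dv by blast
  then have fh: "f = h" by (simp add: fun_eq_iff)
  have "(\<lambda>n. ipnorm ip (\<lambda>x. f x - P n x)) \<longlonglongrightarrow> 0"
    using hlim ipnorm_sym[OF PH hH] fh by simp
  then have "eventually (\<lambda>n. ipnorm ip (\<lambda>x. f x - P n x) < \<epsilon>) sequentially"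
    using e by (rule order_tendstoD(2))
  then obtain N where "ipnorm ip (\<lambda>x. f x - P N x) < \<epsilon>" using eventually_sequentially by auto
  then show ?thesis unfolding P_def c_def by blast
qed

end

lemma npow_real: "npow p (complex_of_real t) = complex_of_real (real p powr (- t))"
  unfolding npow_def using powr_of_real[of "real p" "-t"] by simp

lemma npow_zero [simp]: "npow 0 s = 0"
  unfolding npow_def by simp

definition Zs :: "nat \<Rightarrow> real \<Rightarrow> real" where
  "Zs n \<alpha> = (\<Sum>i. (real n / real (i + n + 1)) powr \<alpha>)"

lemma Zs_summable: assumes "n \<ge> 1" "\<alpha> > 1"
  shows "summable (\<lambda>i. (real n / real (i + n + 1)) powr \<alpha>)"
proof -
  have s1: "summable (\<lambda>i. real i powr (- \<alpha>))" using assms summable_real_powr_iff by simp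
  then have "summable (\<lambda>i. real (i + (n + 1)) powr (- \<alpha>))"
    using summable_iff_shift[of "\<lambda>i. real i powr (- \<alpha>)" "n+1"] by simp
  then have "summable (\<lambda>i. real n powr \<alpha> * real (i + (n + 1)) powr (- \<alpha>))" by (rule summable_mult)
  moreover have "(real n / real (i + n + 1)) powr \<alpha> = real n powr \<alpha> * real (i + (n + 1)) powr (- \<alpha>)" for i
  proof -
    have "(real n / real (i + n + 1)) powr \<alpha> = real n powr \<alpha> / real (i + n + 1) powr \<alpha>"
      by (rule powr_divide)
    also have "\<dots> = real n powr \<alpha> * real (i + (n + 1)) powr (- \<alpha>)"
      by (simp only: powr_minus divide_inverse add.assoc)
    finally show ?thesis .
  qed
  ultimately show ?thesis by simp
qed

lemma Zs_nonneg: "n \<ge> 1 \<Longrightarrow> \<alpha> > 1 \<Longrightarrow> Zs n \<alpha> \<ge> 0"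
  unfolding Zs_def by (intro suminf_nonneg Zs_summable) auto

lemma Zs_le: assumes "n \<ge> 1" "\<alpha> \<ge> 2"
  shows "Zs n \<alpha> \<le> (real n / real (n + 1)) powr (\<alpha> - 2) * Zs n 2"
proof -
  have le: "(real n / real (i + n + 1)) powr \<alpha> \<le> (real n / real (n + 1)) powr (\<alpha> - 2) * (real n / real (i + n + 1)) powr 2" for i
  proof -
    have x0: "0 \<le> real n / real (i + n + 1)" by simp
    have x1: "real n / real (i + n + 1) \<le> real n / real (n + 1)" by (intro divide_left_mono) auto
    have "(real n / real (i + n + 1)) powr \<alpha> = (real n / real (i + n + 1)) powr (\<alpha> - 2) * (real n / real (i + n + 1)) powr 2"
      by (subst powr_add[symmetric]) simp
    also have "\<dots> \<le> (real n / real (n + 1)) powr (\<alpha> - 2) * (real n / real (i + n + 1)) powr 2"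
      using assms x0 x1 by (intro mult_right_mono powr_mono2) auto
    finally show ?thesis .
  qed
  have s2: "summable (\<lambda>i. (real n / real (i + n + 1)) powr 2)" by (rule Zs_summable[OF assms(1)]) simp
  have sa: "summable (\<lambda>i. (real n / real (i + n + 1)) powr \<alpha>)" by (rule Zs_summable[OF assms(1)]) (use assms in simp)
  have "Zs n \<alpha> \<le> (\<Sum>i. (real n / real (n + 1)) powr (\<alpha> - 2) * (real n / real (i + n + 1)) powr 2)"
    unfolding Zs_def using le sa s2 by (intro suminf_le summable_mult) auto
  also have "\<dots> = (real n / real (n + 1)) powr (\<alpha> - 2) * Zs n 2"
    unfolding Zs_def using s2 by (rule suminf_mult)
  finally show ?thesis .
qed

lemma Zs_tendsto: assumes "n \<ge> 1" shows "(\<lambda>q. Zs n (2 + real q)) \<longlonglongrightarrow> 0"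
proof -
  define r where "r = real n / real (n + 1)"
  have r0: "0 < r" "r < 1" unfolding r_def using assms by auto
  have "(\<lambda>q. r ^ q * Zs n 2) \<longlonglongrightarrow> 0 * Zs n 2"
    by (intro tendsto_intros LIMSEQ_power_zero) (use r0 in auto)
  then have l: "(\<lambda>q. r ^ q * Zs n 2) \<longlonglongrightarrow> 0" by simp
  show ?thesis
  proof (rule Lim_null_comparison[OF _ l])
    show "\<forall>\<^sub>F q in sequentially. norm (Zs n (2 + real q)) \<le> r ^ q * Zs n 2"
    proof (intro always_eventually allI)
      fix q :: nat
      have "Zs n (2 + real q) \<le> r powr (2 + real q - 2) * Zs n 2" unfolding r_def using Zs_le[OF assms, of "2 + real q"] by simp
      also have "r powr (2 + real q - 2) = r ^ q" using r0 by (simp add: powr_realpow)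
      finally show "norm (Zs n (2 + real q)) \<le> r ^ q * Zs n 2" using Zs_nonneg[OF assms, of "2 + real q"] by simp
    qed
  qed
qed

lemma powr_aux: fixes n m :: real assumes "n > 0" "m > 0"
  shows "m powr \<sigma> * (n powr t * m powr (- t)) = n powr \<sigma> * (n / m) powr (t - \<sigma>)"
proof -
  have a1: "(n / m) powr (t - \<sigma>) = n powr (t - \<sigma>) / m powr (t - \<sigma>)" by (rule powr_divide)
  have a2: "n powr t = n powr \<sigma> * n powr (t - \<sigma>)" by (subst powr_add[symmetric]) simp
  have a3: "m powr \<sigma> * m powr (- t) = 1 / m powr (t - \<sigma>)"
    using powr_minus[of m "t - \<sigma>"] by (subst powr_add[symmetric]) (simp add: divide_inverse)
  have "m powr \<sigma> * (n powr t * m powr (- t)) = (m powr \<sigma> * m powr (- t)) * n powr t" by (simp add: ac_simps)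
  also have "\<dots> = n powr t / m powr (t - \<sigma>)" using a3 by simp
  also have "\<dots> = n powr \<sigma> * (n powr (t - \<sigma>) / m powr (t - \<sigma>))" using a2 by simp
  also have "\<dots> = n powr \<sigma> * (n / m) powr (t - \<sigma>)" using a1 by simp
  finally show ?thesis .
qed

lemma SE:
  fixes b :: "nat \<Rightarrow> complex"
  assumes bnd: "\<And>p. p \<ge> 1 \<Longrightarrow> norm (b p) \<le> C * real p powr \<sigma>" and n: "n \<ge> 1" and t: "t \<ge> \<sigma> + 2"
  shows "summable (\<lambda>p. b p * npow p (of_real t))"
    and "norm (complex_of_real (real n powr t) * (\<Sum>i. b (i + n) * npow (i + n) (of_real t)) - b n)
           \<le> C * real n powr \<sigma> * Zs n (t - \<sigma>)"
proof -
  define f where "f p = b p * npow p (of_real t)" for p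
  have C0: "C \<ge> 0" using bnd[of 1] by (metis mult.right_neutral norm_ge_zero of_nat_1 order.trans order_refl powr_one_eq_one)
  have nf: "norm (f p) \<le> C * real p powr (- 2)" if p: "p \<ge> 1" for p
  proof -
    have "norm (f p) = norm (b p) * real p powr (- t)" unfolding f_def npow_real by (simp add: norm_mult)
    also have "\<dots> \<le> C * real p powr \<sigma> * real p powr (- t)" using bnd[OF p] by (intro mult_right_mono) auto
    also have "\<dots> = C * real p powr (\<sigma> - t)" by (simp add: powr_add[symmetric] mult.assoc)
    also have "\<dots> \<le> C * real p powr (- 2)" using p t C0 by (intro mult_left_mono powr_mono) auto
    finally show ?thesis .
  qed
  have sp: "summable (\<lambda>p. C * real p powr (- 2))" using summable_real_powr_iff[of "-2"] by (intro summable_mult) simp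
  show sf: "summable (\<lambda>p. b p * npow p (of_real t))"
    using summable_comparison_test'[OF sp, of 1 f] nf unfolding f_def by auto
  then have sf': "summable f" unfolding f_def[abs_def] .
  have sg: "summable (\<lambda>i. f (i + n))" by (rule summable_iff_shift[THEN iffD2, OF sf'])
  have split: "(\<Sum>i. f (Suc i + n)) = (\<Sum>i. f (i + n)) - f n"
    using suminf_split_head[OF sg] by simp
  have sg1: "summable (\<lambda>i. f (Suc i + n))" using sg summable_iff_shift[of "\<lambda>i. f (i + n)" 1] by simp
  have fn: "complex_of_real (real n powr t) * f n = b n"
    unfolding f_def npow_real using n by (simp add: powr_minus field_simps)
  have eq: "complex_of_real (real n powr t) * (\<Sum>i. f (i + n)) - b n
      = (\<Sum>i. complex_of_real (real n powr t) * f (Suc i + n))"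
  proof -
    have "(\<Sum>i. complex_of_real (real n powr t) * f (Suc i + n)) = complex_of_real (real n powr t) * (\<Sum>i. f (Suc i + n))"
      by (rule suminf_mult[OF sg1])
    also have "\<dots> = complex_of_real (real n powr t) * (\<Sum>i. f (i + n)) - complex_of_real (real n powr t) * f n"
      using split by (simp add: right_diff_distrib)
    finally show ?thesis using fn by simp
  qed
  have tb: "norm (complex_of_real (real n powr t) * f (Suc i + n)) \<le> C * real n powr \<sigma> * (real n / real (i + n + 1)) powr (t - \<sigma>)" for i
  proof -
    have "norm (complex_of_real (real n powr t) * f (Suc i + n)) = real n powr t * (norm (b (Suc i + n)) * real (Suc i + n) powr (- t))"
      unfolding f_def npow_real by (simp add: norm_mult)
    also have "\<dots> \<le> real n powr t * (C * real (Suc i + n) powr \<sigma> * real (Suc i + n) powr (- t))"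
      using bnd[of "Suc i + n"] by (intro mult_left_mono mult_right_mono) auto
    also have "\<dots> = C * (real (Suc i + n) powr \<sigma> * (real n powr t * real (Suc i + n) powr (- t)))" by (simp add: ac_simps)
    also have "\<dots> = C * (real n powr \<sigma> * (real n / real (Suc i + n)) powr (t - \<sigma>))"
      using n by (subst powr_aux) auto
    finally show ?thesis by (simp add: ac_simps)
  qed
  have sz: "summable (\<lambda>i. C * real n powr \<sigma> * (real n / real (i + n + 1)) powr (t - \<sigma>))"
    using Zs_summable[OF n, of "t - \<sigma>"] t by (intro summable_mult) auto
  have "norm (\<Sum>i. complex_of_real (real n powr t) * f (Suc i + n)) \<le> (\<Sum>i. C * real n powr \<sigma> * (real n / real (i + n + 1)) powr (t - \<sigma>))"
    by (rule norm_suminf_le[OF tb sz])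
  also have "\<dots> = C * real n powr \<sigma> * Zs n (t - \<sigma>)" unfolding Zs_def
    using Zs_summable[OF n, of "t - \<sigma>"] t by (intro suminf_mult) auto
  finally show "norm (complex_of_real (real n powr t) * (\<Sum>i. b (i + n) * npow (i + n) (of_real t)) - b n)
           \<le> C * real n powr \<sigma> * Zs n (t - \<sigma>)" using eq unfolding f_def by simp
qed

lemma conv_bound:
  fixes b :: "nat \<Rightarrow> complex"
  assumes "convergent (\<lambda>N. \<Sum>p=1..N. b p * npow p (of_real \<sigma>))"
  shows "\<exists>C. \<forall>p\<ge>1. norm (b p) \<le> C * real p powr \<sigma>"
proof -
  define X where "X N = (\<Sum>p=1..N. b p * npow p (of_real \<sigma>))" for N
  have "Bseq X" using assms unfolding X_def by (intro convergent_imp_Bseq) simp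
  then obtain B where B: "\<And>N. norm (X N) \<le> B" using BseqE by blast
  have "norm (b p) \<le> (2 * B) * real p powr \<sigma>" if p: "p \<ge> 1" for p
  proof -
    obtain p' where p': "p = Suc p'" using p by (cases p) auto
    have "X p = X p' + b p * npow p (of_real \<sigma>)" unfolding X_def p' by simp
    then have "b p * npow p (of_real \<sigma>) = X p - X p'" by simp
    then have "norm (b p * npow p (of_real \<sigma>)) \<le> 2 * B"
      using B[of p] B[of p'] norm_triangle_ineq4[of "X p" "X p'"] by simp
    then have "norm (b p) * real p powr (- \<sigma>) \<le> 2 * B" by (simp add: npow_real norm_mult)
    then have "norm (b p) * real p powr (- \<sigma>) * real p powr \<sigma> \<le> 2 * B * real p powr \<sigma>"
      by (intro mult_right_mono) auto
    moreover have "real p powr (- \<sigma>) * real p powr \<sigma> = 1" using p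
      by (simp add: powr_add[symmetric])
    ultimately show ?thesis by (simp add: mult.assoc)
  qed
  then show ?thesis by blast
qed

lemma SE_lim:
  fixes b :: "nat \<Rightarrow> complex"
  assumes bnd: "\<And>p. p \<ge> 1 \<Longrightarrow> norm (b p) \<le> C * real p powr \<sigma>" and n: "n \<ge> 1"
  shows "(\<lambda>q. complex_of_real (real n powr (\<sigma> + 2 + real q)) *
            (\<Sum>i. b (i + n) * npow (i + n) (of_real (\<sigma> + 2 + real q)))) \<longlonglongrightarrow> b n"
proof -
  have "(\<lambda>q. C * real n powr \<sigma> * Zs n (2 + real q)) \<longlonglongrightarrow> C * real n powr \<sigma> * 0"
    by (intro tendsto_intros Zs_tendsto n)
  then have l: "(\<lambda>q. C * real n powr \<sigma> * Zs n (2 + real q)) \<longlonglongrightarrow> 0" by simp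
  have "(\<lambda>q. complex_of_real (real n powr (\<sigma> + 2 + real q)) *
            (\<Sum>i. b (i + n) * npow (i + n) (of_real (\<sigma> + 2 + real q))) - b n) \<longlonglongrightarrow> 0"
  proof (rule Lim_null_comparison[OF _ l], intro always_eventually allI)
    fix q :: nat
    show "norm (complex_of_real (real n powr (\<sigma> + 2 + real q)) *
            (\<Sum>i. b (i + n) * npow (i + n) (of_real (\<sigma> + 2 + real q))) - b n) \<le> C * real n powr \<sigma> * Zs n (2 + real q)"
      using SE(2)[OF bnd n, of "\<sigma> + 2 + real q"] by simp
  qed
  then show ?thesis by (simp add: LIM_zero_iff)
qed

definition Am :: "(nat \<Rightarrow> nat \<Rightarrow> complex) \<Rightarrow> nat \<Rightarrow> nat \<Rightarrow> complex \<Rightarrow> complex" where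
  "Am a k n s = (\<Sum>m=1..n+k. a m n * npow m s)"
definition Bm :: "(nat \<Rightarrow> nat \<Rightarrow> complex) \<Rightarrow> nat \<Rightarrow> nat \<Rightarrow> complex \<Rightarrow> complex" where
  "Bm a k m u = (\<Sum>n=1..m+k. a m n * npow n u)"

lemma band1: "k_diagonal k a \<Longrightarrow> m > n + k \<Longrightarrow> a m n = 0"
  unfolding k_diagonal_def by auto
lemma band2: "k_diagonal k a \<Longrightarrow> n > m + k \<Longrightarrow> a m n = 0"
  unfolding k_diagonal_def by auto

lemma Am_ext: assumes "k_diagonal k a" "n + k \<le> M"
  shows "(\<Sum>m=1..M. a m n * npow m s) = Am a k n s"
  unfolding Am_def using assms band1[OF assms(1)]
  by (intro sum.mono_neutral_right) auto

lemma Bm_ext: assumes "k_diagonal k a" "m + k \<le> N"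
  shows "(\<Sum>n=1..N. a m n * npow n u) = Bm a k m u"
  unfolding Bm_def using assms band2[OF assms(1)]
  by (intro sum.mono_neutral_right) auto

lemma dpsum_row: assumes "k_diagonal k a" "N + k \<le> M"
  shows "dpsum a s w (M, N) = (\<Sum>n=1..N. Am a k n s * npow n w)"
proof -
  have "dpsum a s w (M, N) = (\<Sum>n=1..N. \<Sum>m=1..M. a m n * npow m s * npow n w)"
    unfolding dpsum_def by (simp only: split) (rule sum.swap)
  also have "\<dots> = (\<Sum>n=1..N. (\<Sum>m=1..M. a m n * npow m s) * npow n w)"
    by (simp add: sum_distrib_right)
  also have "\<dots> = (\<Sum>n=1..N. Am a k n s * npow n w)"
  proof (intro sum.cong refl)
    fix n assume "n \<in> {1..N}"
    then have "(\<Sum>m=1..M. a m n * npow m s) = Am a k n s" using assms by (intro Am_ext) auto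
    then show "(\<Sum>m=1..M. a m n * npow m s) * npow n w = Am a k n s * npow n w" by simp
  qed
  finally show ?thesis .
qed

lemma dpsum_col: assumes "k_diagonal k a" "M + k \<le> N"
  shows "dpsum a s w (M, N) = (\<Sum>m=1..M. npow m s * Bm a k m w)"
proof -
  have "dpsum a s w (M, N) = (\<Sum>m=1..M. npow m s * (\<Sum>n=1..N. a m n * npow n w))"
    unfolding dpsum_def by (simp add: sum_distrib_left ac_simps)
  also have "\<dots> = (\<Sum>m=1..M. npow m s * Bm a k m w)"
  proof (intro sum.cong refl)
    fix m assume "m \<in> {1..M}"
    then have "(\<Sum>n=1..N. a m n * npow n w) = Bm a k m w" using assms by (intro Bm_ext) auto
    then show "npow m s * (\<Sum>n=1..N. a m n * npow n w) = npow m s * Bm a k m w" by simp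
  qed
  finally show ?thesis .
qed

lemma halfplane_cnj: "u \<in> halfplane \<rho> \<Longrightarrow> cnj u \<in> halfplane \<rho>"
  unfolding halfplane_def by simp

lemma PL: assumes "dirichlet_series_kernel \<rho> a" "s \<in> halfplane \<rho>" "u \<in> halfplane \<rho>"
  shows "(dpsum a s (cnj u) \<longlongrightarrow> dkernel a s u) (sequentially \<times>\<^sub>F sequentially)"
proof -
  have "regularly_convergent_at a s (cnj u)"
    using assms halfplane_cnj unfolding dirichlet_series_kernel_def by blast
  then obtain L where L: "(dpsum a s (cnj u) \<longlongrightarrow> L) (sequentially \<times>\<^sub>F sequentially)"
    unfolding regularly_convergent_at_def by blast
  have nb: "sequentially \<times>\<^sub>F sequentially \<noteq> bot" by (simp add: prod_filter_eq_bot)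
  have "dkernel a s u = L" unfolding dkernel_def using L nb by (intro tendsto_Lim)
  then show ?thesis using L by simp
qed

lemma PL_comp: assumes "(f \<longlongrightarrow> L) (sequentially \<times>\<^sub>F sequentially)"
   "filterlim g sequentially sequentially" "filterlim h sequentially sequentially"
 shows "(\<lambda>N. f (g N, h N)) \<longlonglongrightarrow> L"
proof -
  have "filterlim (\<lambda>N. (g N, h N)) (sequentially \<times>\<^sub>F sequentially) sequentially"
    using assms(2,3) by (rule filterlim_Pair)
  then show ?thesis using assms(1) by (rule filterlim_compose[of f, rotated])
qed

lemma K1: assumes "dirichlet_series_kernel \<rho> a" "k_diagonal k a" "s \<in> halfplane \<rho>" "u \<in> halfplane \<rho>"
  shows "(\<lambda>N. \<Sum>n=1..N. Am a k n s * npow n (cnj u)) \<longlonglongrightarrow> dkernel a s u"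
proof -
  have "(\<lambda>N. dpsum a s (cnj u) (N + k, N)) \<longlonglongrightarrow> dkernel a s u"
    using PL[OF assms(1,3,4)] filterlim_add_const_nat_at_top filterlim_ident by (rule PL_comp)
  then show ?thesis using dpsum_row[OF assms(2)] by simp
qed

lemma K2: assumes "dirichlet_series_kernel \<rho> a" "k_diagonal k a" "s \<in> halfplane \<rho>" "u \<in> halfplane \<rho>"
  shows "(\<lambda>M. \<Sum>m=1..M. npow m s * Bm a k m (cnj u)) \<longlonglongrightarrow> dkernel a s u"
proof -
  have "(\<lambda>N. dpsum a s (cnj u) (N, N + k)) \<longlonglongrightarrow> dkernel a s u"
    using PL[OF assms(1,3,4)] filterlim_ident filterlim_add_const_nat_at_top by (rule PL_comp)
  then show ?thesis using dpsum_col[OF assms(2)] by simp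
qed

lemma KD: assumes "dirichlet_series_kernel \<rho> a" "s \<in> halfplane \<rho>" "u \<in> halfplane \<rho>"
  shows "(\<lambda>N. dpsum a s (cnj u) (N, N)) \<longlonglongrightarrow> dkernel a s u"
  using PL[OF assms] filterlim_ident filterlim_ident by (rule PL_comp)

lemma not1: "\<not> Suc 0 \<le> i \<Longrightarrow> i = 0" by simp

lemma sum_1N: fixes f :: "nat \<Rightarrow> 'a::comm_monoid_add" shows "f 0 = 0 \<Longrightarrow> (\<Sum>p=1..N. f p) = (\<Sum>p<Suc N. f p)"
  by (intro sum.mono_neutral_left) (auto dest: not1)

lemma sum_1n: fixes f :: "nat \<Rightarrow> 'a::comm_monoid_add" shows "f 0 = 0 \<Longrightarrow> (\<Sum>p\<in>{1..<n}. f p) = (\<Sum>p<n. f p)"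
  by (intro sum.mono_neutral_left) (auto simp: not_le)

lemma split_n: fixes f :: "nat \<Rightarrow> complex" shows "summable f \<Longrightarrow> f 0 = 0 \<Longrightarrow> suminf f = (\<Sum>i. f (i + n)) + (\<Sum>p\<in>{1..<n}. f p)"
  using suminf_split_initial_segment[of f n] sum_1n[of f n] by simp

lemma sums_1N: assumes "f 0 = 0" "(\<lambda>N. \<Sum>p=1..N. f p) \<longlonglongrightarrow> S" shows "f sums S"
proof -
  have "(\<lambda>N. \<Sum>p<Suc N. f p) \<longlonglongrightarrow> S" using assms sum_1N[of f] by simp
  then have "(\<lambda>N. \<Sum>p<N. f p) \<longlonglongrightarrow> S" by (rule LIMSEQ_imp_Suc)
  then show ?thesis unfolding sums_def .
qed

lemma sums_1N_iff: assumes "f 0 = 0" shows "f sums S \<longleftrightarrow> (\<lambda>N. \<Sum>p=1..N. f p) \<longlonglongrightarrow> S"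
proof
  assume "f sums S"
  then have "(\<lambda>N. \<Sum>p<N. f p) \<longlonglongrightarrow> S" unfolding sums_def .
  then have "(\<lambda>N. \<Sum>p<Suc N. f p) \<longlonglongrightarrow> S" by (rule LIMSEQ_Suc)
  then show "(\<lambda>N. \<Sum>p=1..N. f p) \<longlonglongrightarrow> S" using assms sum_1N[of f] by simp
next
  assume "(\<lambda>N. \<Sum>p=1..N. f p) \<longlonglongrightarrow> S"
  then show "f sums S" by (rule sums_1N[of f S, OF assms])
qed

lemma tail_lim:
  fixes b :: "nat \<Rightarrow> complex" and S :: "nat \<Rightarrow> complex"
  assumes bnd: "\<And>p. p \<ge> 1 \<Longrightarrow> norm (b p) \<le> C * real p powr \<sigma>" and n: "n \<ge> 1"
    and S: "\<And>q. (\<lambda>N. \<Sum>p=1..N. b p * npow p (of_real (\<sigma> + 2 + real q))) \<longlonglongrightarrow> S q"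
  shows "(\<lambda>q. complex_of_real (real n powr (\<sigma> + 2 + real q)) *
      (S q - (\<Sum>p\<in>{1..<n}. b p * npow p (of_real (\<sigma> + 2 + real q))))) \<longlonglongrightarrow> b n"
proof -
  have eq: "S q - (\<Sum>p\<in>{1..<n}. b p * npow p (of_real (\<sigma> + 2 + real q))) =
      (\<Sum>i. b (i + n) * npow (i + n) (of_real (\<sigma> + 2 + real q)))" for q
  proof -
    define f where "f p = b p * npow p (of_real (\<sigma> + 2 + real q))" for p
    have sf: "summable f" using SE(1)[OF bnd n, of "\<sigma> + 2 + real q"] unfolding f_def[abs_def] by simp
    have "(\<lambda>N. \<Sum>p=1..N. f p) \<longlonglongrightarrow> S q" using S[of q] unfolding f_def .
    then have "f sums S q" by (rule sums_1N[rotated]) (simp add: f_def)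
    then have "S q = suminf f" by (simp add: sums_iff)
    also have "\<dots> = (\<Sum>i. f (i + n)) + (\<Sum>p\<in>{1..<n}. f p)" using sf by (rule split_n) (simp add: f_def)
    finally show ?thesis unfolding f_def by simp
  qed
  show ?thesis unfolding eq using SE_lim[OF bnd n] .
qed

lemma a_bound: assumes "dirichlet_series_kernel \<rho> a" "k_diagonal k a" "\<sigma> > \<rho>"
  shows "\<exists>C. \<forall>m p. m \<ge> 1 \<longrightarrow> p \<ge> 1 \<longrightarrow> norm (a m p) \<le> C * real m powr \<sigma> * real p powr \<sigma>"
proof -
  define w where "w = complex_of_real \<sigma>"
  have w: "w \<in> halfplane \<rho>" unfolding w_def halfplane_def using assms by simp
  define D where "D = dpsum a w w"
  define L where "L = dkernel a w w"
  define T where "T m p = a m p * npow m w * npow p w" for m p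
  have "(D \<longlongrightarrow> L) (sequentially \<times>\<^sub>F sequentially)"
    using PL[OF assms(1) w w] unfolding D_def L_def w_def by simp
  then have "eventually (\<lambda>x. dist (D x) L < 1/4) (sequentially \<times>\<^sub>F sequentially)"
    by (rule tendstoD) simp
  then obtain N0 where N0: "\<And>m n. m \<ge> N0 \<Longrightarrow> n \<ge> N0 \<Longrightarrow> dist (D (n, m)) L < 1/4"
    unfolding eventually_prod_sequentially by blast
  have Dd: "D (Suc M, Suc N) - D (M, Suc N) - D (Suc M, N) + D (M, N) = T (Suc M) (Suc N)" for M N
  proof -
    define R where "R m N = (\<Sum>n=1..N. a m n * npow m w * npow n w)" for m N
    have D1: "D (Suc M, N) = D (M, N) + R (Suc M) N" for M N
      unfolding D_def dpsum_def R_def by simp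
    have R1: "R m (Suc N) = R m N + T m (Suc N)" for m N
      unfolding R_def T_def by simp
    have "D (M, Suc N) - D (M, N) = (\<Sum>m=1..M. T m (Suc N))"
    proof (induction M)
      case 0 then show ?case unfolding D_def dpsum_def by simp
    next
      case (Suc M)
      then show ?case using D1[of M "Suc N"] D1[of M N] R1[of "Suc M" N] by simp
    qed
    then show ?thesis using D1[of M "Suc N"] D1[of M N] R1[of "Suc M" N]
      by (simp add: algebra_simps)
  qed
  have Tbig: "norm (T m p) \<le> 1" if "m \<ge> Suc N0" "p \<ge> Suc N0" for m p
  proof -
    define M where "M = m - 1"
    define N where "N = p - 1"
    have MN: "m = Suc M" "p = Suc N" "M \<ge> N0" "N \<ge> N0" using that unfolding M_def N_def by auto
    have e: "(D (Suc M, Suc N) - L) - (D (M, Suc N) - L) - (D (Suc M, N) - L) + (D (M, N) - L)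
        = D (Suc M, Suc N) - D (M, Suc N) - D (Suc M, N) + D (M, N)" by simp
    have "T m p = (D (Suc M, Suc N) - L) - (D (M, Suc N) - L) - (D (Suc M, N) - L) + (D (M, N) - L)"
      unfolding e MN(1,2) by (rule Dd[symmetric])
    also have "norm \<dots> \<le> norm (D (Suc M, Suc N) - L) + norm (D (M, Suc N) - L) + norm (D (Suc M, N) - L) + norm (D (M, N) - L)"
      using norm_triangle_ineq[of "(D (Suc M, Suc N) - L) - (D (M, Suc N) - L) - (D (Suc M, N) - L)" "D (M, N) - L"]
        norm_triangle_ineq4[of "(D (Suc M, Suc N) - L) - (D (M, Suc N) - L)" "D (Suc M, N) - L"]
        norm_triangle_ineq4[of "D (Suc M, Suc N) - L" "D (M, Suc N) - L"] by linarith
    also have "\<dots> \<le> 1/4 + 1/4 + 1/4 + 1/4"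
    proof -
      have "norm (D (Suc M, Suc N) - L) < 1/4" using N0[of "Suc N" "Suc M"] MN by (simp add: dist_norm)
      moreover have "norm (D (M, Suc N) - L) < 1/4" using N0[of "Suc N" M] MN by (simp add: dist_norm)
      moreover have "norm (D (Suc M, N) - L) < 1/4" using N0[of N "Suc M"] MN by (simp add: dist_norm)
      moreover have "norm (D (M, N) - L) < 1/4" using N0[of N M] MN by (simp add: dist_norm)
      ultimately show ?thesis by linarith
    qed
    finally show ?thesis by simp
  qed
  define Cf where "Cf = (\<Sum>m\<le>N0+k. \<Sum>p\<le>N0+k. norm (T m p))"
  have Tall: "norm (T m p) \<le> 1 + Cf" for m p
  proof (cases "a m p = 0")
    case True then show ?thesis unfolding T_def Cf_def by (simp add: sum_nonneg add_nonneg_nonneg)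
  next
    case False
    show ?thesis
    proof (cases "m \<ge> Suc N0 \<and> p \<ge> Suc N0")
      case True then show ?thesis
      proof -
        have "Cf \<ge> 0" unfolding Cf_def by (intro sum_nonneg) auto
        then show ?thesis using Tbig[of m p] True by linarith
      qed
    next
      case c: False
      have "\<not> (m > p + k)" using band1[OF assms(2)] False by blast
      moreover have "\<not> (p > m + k)" using band2[OF assms(2)] False by blast
      ultimately have mp: "m \<le> N0 + k" "p \<le> N0 + k" using c by auto
      have "norm (T m p) \<le> (\<Sum>p'\<le>N0+k. norm (T m p'))"
        using mp by (intro member_le_sum[of p "{..N0+k}" "\<lambda>p'. norm (T m p')"]) auto
      also have "\<dots> \<le> Cf" unfolding Cf_def
        using mp by (intro member_le_sum[of m "{..N0+k}" "\<lambda>m. \<Sum>p'\<le>N0+k. norm (T m p')"]) (auto intro: sum_nonneg)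
      finally show ?thesis by simp
    qed
  qed
  have "norm (a m p) \<le> (1 + Cf) * real m powr \<sigma> * real p powr \<sigma>" if "m \<ge> 1" "p \<ge> 1" for m p
  proof -
    have "norm (T m p) = norm (a m p) * real m powr (- \<sigma>) * real p powr (- \<sigma>)"
      unfolding T_def w_def npow_real by (simp add: norm_mult)
    then have "norm (T m p) * real m powr \<sigma> * real p powr \<sigma> =
        norm (a m p) * (real m powr (- \<sigma>) * real m powr \<sigma>) * (real p powr (- \<sigma>) * real p powr \<sigma>)"
      by (simp add: ac_simps)
    also have "real m powr (- \<sigma>) * real m powr \<sigma> = 1" using that by (simp add: powr_add[symmetric])
    also have "real p powr (- \<sigma>) * real p powr \<sigma> = 1" using that by (simp add: powr_add[symmetric])
    finally have "norm (a m p) = norm (T m p) * real m powr \<sigma> * real p powr \<sigma>" by simp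
    also have "\<dots> \<le> (1 + Cf) * real m powr \<sigma> * real p powr \<sigma>"
      using Tall[of m p] by (intro mult_right_mono) auto
    finally show ?thesis .
  qed
  then show ?thesis by blast
qed

locale dk = rk "halfplane \<rho>" H ip "dkernel a"
  for \<rho> :: real and H :: "(complex \<Rightarrow> complex) set" and ip and a :: "nat \<Rightarrow> nat \<Rightarrow> complex" +
  fixes k :: nat
  assumes dsk: "dirichlet_series_kernel \<rho> a" and kd: "k_diagonal k a"
begin

definition "sg = \<rho> + 1"
definition "tau q = sg + 2 + real q"
definition "Kt q = kfun (halfplane \<rho>) (dkernel a) (complex_of_real (tau q))"
definition "Ah n = (\<lambda>s. if s \<in> halfplane \<rho> then Am a k n s else 0)"
definition "cf n q = complex_of_real (real n powr tau q)"
definition "et p q = npow p (complex_of_real (tau q))"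
definition "gg n q = (\<lambda>x. cf n q * (Kt q x - (\<Sum>i\<in>{1..<n}. et i q * Ah i x)))"

lemma tau_in: "complex_of_real (tau q) \<in> halfplane \<rho>"
  unfolding tau_def sg_def halfplane_def by simp
lemma sg_in: "complex_of_real sg \<in> halfplane \<rho>"
  unfolding sg_def halfplane_def by simp
lemma sg_gt: "sg > \<rho>" unfolding sg_def by simp
lemma Kt_H: "Kt q \<in> H" unfolding Kt_def using kfun_H tau_in by blast
lemma Kt_eval: "s \<in> halfplane \<rho> \<Longrightarrow> Kt q s = dkernel a s (complex_of_real (tau q))"
  unfolding Kt_def kfun_def by simp
lemma Ah_eval: "s \<in> halfplane \<rho> \<Longrightarrow> Ah n s = Am a k n s" unfolding Ah_def by simp
lemma cnj_real: "cnj (complex_of_real x) = complex_of_real x" by simp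
lemma cnj_et: "cnj (et p q) = et p q" unfolding et_def npow_real by simp
lemma cnj_cf: "cnj (cf n q) = cf n q" unfolding cf_def by simp
lemma cf_et: "n \<ge> 1 \<Longrightarrow> cf n q * et n q = 1"
  unfolding cf_def et_def npow_real by (simp add: powr_minus)
lemma et_zero[simp]: "et 0 q = 0" unfolding et_def by simp
lemma Kt_Kt: "ip (Kt q) (Kt l) = dkernel a (complex_of_real (tau l)) (complex_of_real (tau q))"
  using repro[OF tau_in[of l] Kt_H[of q]] Kt_eval[OF tau_in[of l], of q] unfolding Kt_def by simp
lemma Ah_Kt: "Ah i \<in> H \<Longrightarrow> ip (Ah i) (Kt l) = Am a k i (complex_of_real (tau l))"
  using repro[OF tau_in[of l], of "Ah i"] Ah_eval[OF tau_in[of l]] unfolding Kt_def by simp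
lemma tau_sg: "tau q = sg + 2 + real q" unfolding tau_def ..
lemma tau_ge: "tau q \<ge> sg + 2" unfolding tau_def by simp

lemma Am_sums: "(\<lambda>m. a m p * npow m s) sums Am a k p s"
proof -
  have "(\<lambda>m. a m p * npow m s) sums (\<Sum>m\<in>{1..p+k}. a m p * npow m s)"
  proof (rule sums_finite)
    fix m assume "m \<notin> {1..p+k}"
    then have "m = 0 \<or> m > p + k" by auto
    then show "a m p * npow m s = 0" using band1[OF kd] by auto
  qed simp
  then show ?thesis unfolding Am_def by simp
qed

lemma Bm_sums: "(\<lambda>p. a j p * npow p u) sums Bm a k j u"
proof -
  have "(\<lambda>p. a j p * npow p u) sums (\<Sum>p\<in>{1..j+k}. a j p * npow p u)"
  proof (rule sums_finite)
    fix p assume "p \<notin> {1..j+k}"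
    then have "p = 0 \<or> p > j + k" by auto
    then show "a j p * npow p u = 0" using band2[OF kd] by auto
  qed simp
  then show ?thesis unfolding Bm_def by simp
qed

lemma Am_conv: "(\<lambda>N. \<Sum>m=1..N. a m p * npow m s) \<longlonglongrightarrow> Am a k p s"
  using sums_1N_iff[of "\<lambda>m. a m p * npow m s", THEN iffD1, OF _ Am_sums] by simp
lemma Bm_conv: "(\<lambda>N. \<Sum>p=1..N. a j p * npow p u) \<longlonglongrightarrow> Bm a k j u"
  using sums_1N_iff[of "\<lambda>p. a j p * npow p u", THEN iffD1, OF _ Bm_sums] by simp

lemma K1s: "s \<in> halfplane \<rho> \<Longrightarrow> u \<in> halfplane \<rho> \<Longrightarrow> (\<lambda>p. Am a k p s * npow p (cnj u)) sums dkernel a s u"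
  using K1[OF dsk kd] by (intro sums_1N) simp_all
lemma K2c: "s \<in> halfplane \<rho> \<Longrightarrow> u \<in> halfplane \<rho> \<Longrightarrow> (\<lambda>M. \<Sum>m=1..M. Bm a k m (cnj u) * npow m s) \<longlonglongrightarrow> dkernel a s u"
  using K2[OF dsk kd] by (simp add: mult.commute)
lemma K1c: "s \<in> halfplane \<rho> \<Longrightarrow> u \<in> halfplane \<rho> \<Longrightarrow> (\<lambda>N. \<Sum>n=1..N. Am a k n s * npow n (cnj u)) \<longlonglongrightarrow> dkernel a s u"
  using K1[OF dsk kd] by simp

definition "Ca = (SOME C. \<forall>m p. m \<ge> 1 \<longrightarrow> p \<ge> 1 \<longrightarrow> norm (a m p) \<le> C * real m powr sg * real p powr sg)"

lemma Ca_bnd: "m \<ge> 1 \<Longrightarrow> p \<ge> 1 \<Longrightarrow> norm (a m p) \<le> Ca * real m powr sg * real p powr sg"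
proof -
  assume "m \<ge> 1" "p \<ge> 1"
  moreover have "\<exists>C. \<forall>m p. m \<ge> 1 \<longrightarrow> p \<ge> 1 \<longrightarrow> norm (a m p) \<le> C * real m powr sg * real p powr sg"
    using a_bound[OF dsk kd sg_gt] .
  then have "\<forall>m p. m \<ge> 1 \<longrightarrow> p \<ge> 1 \<longrightarrow> norm (a m p) \<le> Ca * real m powr sg * real p powr sg"
    unfolding Ca_def by (rule someI_ex)
  ultimately show ?thesis by blast
qed

lemma Ca_nonneg: "Ca \<ge> 0"
  using Ca_bnd[of 1 1] by (metis mult.right_neutral norm_ge_zero of_nat_1 order_trans order_refl powr_one_eq_one)

lemma Zs_mono2: "n \<ge> 1 \<Longrightarrow> Zs n (2 + real l) \<le> Zs n 2"
proof -
  assume n: "n \<ge> 1"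
  have "Zs n (2 + real l) \<le> (real n / real (n + 1)) powr (2 + real l - 2) * Zs n 2" using Zs_le[OF n, of "2 + real l"] by simp
  also have "\<dots> \<le> 1 * Zs n 2"
    using Zs_nonneg[OF n, of 2] by (intro mult_right_mono powr_le1) auto
  finally show ?thesis by simp
qed

lemma abnd: obtains C where "\<And>m p. m \<ge> 1 \<Longrightarrow> p \<ge> 1 \<Longrightarrow> norm (a m p) \<le> C * real m powr sg * real p powr sg"
  using a_bound[OF dsk kd sg_gt] by blast

end

context dk
begin

context
  fixes n :: nat
  assumes n1: "n \<ge> 1"
    and hH: "\<And>j. j \<in> {1..<n} \<Longrightarrow> Ah j \<in> H"
    and hK: "\<And>j q. j \<in> {1..<n} \<Longrightarrow> ip (Kt q) (Ah j) = Bm a k j (complex_of_real (tau q))"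
    and hG: "\<And>i j. i \<in> {1..<n} \<Longrightarrow> j \<in> {1..<n} \<Longrightarrow> ip (Ah i) (Ah j) = a j i"
begin

definition "Sq q = (\<lambda>x. \<Sum>i\<in>{1..<n}. et i q * Ah i x)"

lemma Sq_H: "Sq q \<in> H" unfolding Sq_def using hH by (intro sum_H) auto
lemma gg_alt: "gg n q = (\<lambda>x. cf n q * (Kt q x - Sq q x))" unfolding gg_def Sq_def ..
lemma gg_H: "gg n q \<in> H" unfolding gg_alt using Kt_H Sq_H by (intro scale_H diff_H)

lemma gg_eval: "s \<in> halfplane \<rho> \<Longrightarrow>
   gg n q s = cf n q * (dkernel a s (complex_of_real (tau q)) - (\<Sum>i\<in>{1..<n}. et i q * Am a k i s))"
  unfolding gg_def using Kt_eval Ah_eval by simp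

lemma ip_Kt_S: "ip (Kt q) (Sq l) = (\<Sum>j\<in>{1..<n}. et j l * Bm a k j (complex_of_real (tau q)))"
  unfolding Sq_def using hH Kt_H by (subst ip_sum2) (auto simp: cnj_et hK)

lemma ip_S_Kt: "ip (Sq q) (Kt l) = (\<Sum>i\<in>{1..<n}. et i q * Am a k i (complex_of_real (tau l)))"
  unfolding Sq_def using hH Kt_H by (subst ip_sum1) (auto simp: Ah_Kt)

lemma ip_S_S: "ip (Sq q) (Sq l) = (\<Sum>i\<in>{1..<n}. et i q * (\<Sum>j\<in>{1..<n}. et j l * a j i))"
proof -
  have "ip (Sq q) (Sq l) = (\<Sum>i\<in>{1..<n}. et i q * ip (Ah i) (Sq l))"
    unfolding Sq_def[of q] using hH Sq_H by (intro ip_sum1) auto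
  also have "\<dots> = (\<Sum>i\<in>{1..<n}. et i q * (\<Sum>j\<in>{1..<n}. et j l * a j i))"
  proof (intro sum.cong refl)
    fix i assume i: "i \<in> {1..<n}"
    have "ip (Ah i) (Sq l) = (\<Sum>j\<in>{1..<n}. cnj (et j l) * ip (Ah i) (Ah j))"
      unfolding Sq_def using hH i by (intro ip_sum2) auto
    also have "\<dots> = (\<Sum>j\<in>{1..<n}. et j l * a j i)" using hG i by (intro sum.cong refl) (simp add: cnj_et)
    finally show "et i q * ip (Ah i) (Sq l) = et i q * (\<Sum>j\<in>{1..<n}. et j l * a j i)" by simp
  qed
  finally show ?thesis .
qed

definition "bt l p = cf n l * (Am a k p (complex_of_real (tau l)) - (\<Sum>j\<in>{1..<n}. a j p * et j l))"
definition "FF q l = cf n q * (\<Sum>i. bt l (i + n) * et (i + n) q)"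

lemma X_sums:
  fixes l q :: nat
  defines "t \<equiv> complex_of_real (tau l)" and "r \<equiv> complex_of_real (tau q)"
  shows "(\<lambda>p. if p \<in> {1..<n} then 0 else et p q * (Am a k p t - (\<Sum>j\<in>{1..<n}. a j p * et j l)))
    sums (dkernel a t r - (\<Sum>j\<in>{1..<n}. et j l * Bm a k j r) - (\<Sum>i\<in>{1..<n}. et i q * Am a k i t)
          + (\<Sum>i\<in>{1..<n}. et i q * (\<Sum>j\<in>{1..<n}. et j l * a j i)))"
proof -
  have s1: "(\<lambda>p. Am a k p t * et p q) sums dkernel a t r"
    using K1s[of t r] tau_in unfolding t_def r_def et_def by simp
  have s2: "(\<lambda>p. \<Sum>j\<in>{1..<n}. et j l * (a j p * et p q)) sums (\<Sum>j\<in>{1..<n}. et j l * Bm a k j r)"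
    by (intro sums_sum sums_mult) (use Bm_sums in \<open>simp add: et_def r_def\<close>)
  have s3: "(\<lambda>p. if p \<in> {1..<n} then et p q * Am a k p t else 0) sums (\<Sum>i\<in>{1..<n}. et i q * Am a k i t)"
    by (rule sums_If_finite_set) simp
  have s4: "(\<lambda>p. if p \<in> {1..<n} then et p q * (\<Sum>j\<in>{1..<n}. et j l * a j p) else 0) sums
      (\<Sum>i\<in>{1..<n}. et i q * (\<Sum>j\<in>{1..<n}. et j l * a j i))"
    by (rule sums_If_finite_set) simp
  have all: "(\<lambda>p. Am a k p t * et p q - (\<Sum>j\<in>{1..<n}. et j l * (a j p * et p q))
     - (if p \<in> {1..<n} then et p q * Am a k p t else 0) + (if p \<in> {1..<n} then et p q * (\<Sum>j\<in>{1..<n}. et j l * a j p) else 0))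
     sums (dkernel a t r - (\<Sum>j\<in>{1..<n}. et j l * Bm a k j r) - (\<Sum>i\<in>{1..<n}. et i q * Am a k i t)
          + (\<Sum>i\<in>{1..<n}. et i q * (\<Sum>j\<in>{1..<n}. et j l * a j i)))"
    by (intro sums_add sums_diff s1 s2 s3 s4)
  show ?thesis
  proof (rule iffD1[OF sums_cong all])
    fix p
    have e: "(\<Sum>j\<in>{1..<n}. et j l * (a j p * et p q)) = et p q * (\<Sum>j\<in>{1..<n}. a j p * et j l)"
      by (simp add: sum_distrib_left ac_simps)
    have e2: "(\<Sum>j\<in>{1..<n}. et j l * a j p) = (\<Sum>j\<in>{1..<n}. a j p * et j l)" by (simp add: ac_simps)
    show "Am a k p t * et p q - (\<Sum>j\<in>{1..<n}. et j l * (a j p * et p q))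
     - (if p \<in> {1..<n} then et p q * Am a k p t else 0) + (if p \<in> {1..<n} then et p q * (\<Sum>j\<in>{1..<n}. et j l * a j p) else 0)
     = (if p \<in> {1..<n} then 0 else et p q * (Am a k p t - (\<Sum>j\<in>{1..<n}. a j p * et j l)))"
      unfolding e e2 by (simp add: algebra_simps)
  qed
qed

lemma ip_gg: "ip (gg n q) (gg n l) = FF q l"
proof -
  define t where "t = complex_of_real (tau l)"
  define r where "r = complex_of_real (tau q)"
  define h where "h p = (if p \<in> {1..<n} then 0 else et p q * (Am a k p t - (\<Sum>j\<in>{1..<n}. a j p * et j l)))" for p
  define X where "X = dkernel a t r - (\<Sum>j\<in>{1..<n}. et j l * Bm a k j r) - (\<Sum>i\<in>{1..<n}. et i q * Am a k i t)
          + (\<Sum>i\<in>{1..<n}. et i q * (\<Sum>j\<in>{1..<n}. et j l * a j i))"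
  have hs: "h sums X" unfolding h_def X_def t_def r_def by (rule X_sums)
  have sh: "summable h" using hs by (rule sums_summable)
  have h0: "h 0 = 0" unfolding h_def by simp
  have "X = suminf h" using hs by (rule sums_unique)
  also have "\<dots> = (\<Sum>i. h (i + n)) + (\<Sum>p\<in>{1..<n}. h p)" using sh h0 by (rule split_n)
  also have "(\<Sum>p\<in>{1..<n}. h p) = 0" unfolding h_def by simp
  finally have Xe: "X = (\<Sum>i. h (i + n))" by simp
  have shn: "summable (\<lambda>i. h (i + n))" by (rule summable_iff_shift[THEN iffD2, OF sh])
  have "ip (gg n q) (gg n l) = cf n q * cnj (cf n l) * (ip (Kt q) (Kt l) - ip (Kt q) (Sq l) - ip (Sq q) (Kt l) + ip (Sq q) (Sq l))"
    unfolding gg_alt using Kt_H Sq_H by (intro ip_cdiff)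
  also have "\<dots> = cf n q * (cf n l * X)"
    unfolding X_def t_def r_def Kt_Kt ip_Kt_S ip_S_Kt ip_S_S cnj_cf by simp
  also have "cf n l * X = (\<Sum>i. cf n l * h (i + n))" unfolding Xe using shn by (rule suminf_mult[symmetric])
  also have "\<dots> = (\<Sum>i. bt l (i + n) * et (i + n) q)"
    unfolding h_def bt_def t_def by (intro suminf_cong) (simp add: ac_simps)
  finally show ?thesis unfolding FF_def .
qed

lemma bt_alt: "bt l p = cf n l * (\<Sum>i. a (i + n) p * npow (i + n) (complex_of_real (tau l)))"
proof -
  define f where "f m = a m p * npow m (complex_of_real (tau l))" for m
  have fs: "f sums Am a k p (complex_of_real (tau l))" unfolding f_def by (rule Am_sums)
  have "Am a k p (complex_of_real (tau l)) = suminf f" using fs by (rule sums_unique)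
  also have "\<dots> = (\<Sum>i. f (i + n)) + (\<Sum>m\<in>{1..<n}. f m)" using sums_summable[OF fs] by (rule split_n) (simp add: f_def)
  finally show ?thesis unfolding bt_def f_def et_def by simp
qed

lemma bt_near: "p \<ge> 1 \<Longrightarrow> norm (bt l p - a n p) \<le> Ca * real p powr sg * real n powr sg * Zs n (2 + real l)"
proof -
  assume p: "p \<ge> 1"
  have b: "norm (a m p) \<le> (Ca * real p powr sg) * real m powr sg" if "m \<ge> 1" for m
    using Ca_bnd[OF that p] by (simp add: ac_simps)
  have "norm (complex_of_real (real n powr tau l) * (\<Sum>i. a (i + n) p * npow (i + n) (of_real (tau l))) - a n p)
     \<le> (Ca * real p powr sg) * real n powr sg * Zs n (tau l - sg)"
    using SE(2)[of "\<lambda>m. a m p", OF b n1] tau_ge by blast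
  then show ?thesis unfolding bt_alt cf_def tau_sg by simp
qed

definition "Cb = Ca * real n powr sg * (1 + Zs n 2)"

lemma bt_bnd: "p \<ge> 1 \<Longrightarrow> norm (bt l p) \<le> Cb * real p powr sg"
proof -
  assume p: "p \<ge> 1"
  have "norm (bt l p) \<le> norm (a n p) + norm (bt l p - a n p)" by (metis add.commute diff_add_cancel norm_triangle_ineq)
  also have "\<dots> \<le> Ca * real n powr sg * real p powr sg + Ca * real p powr sg * real n powr sg * Zs n 2"
  proof (intro add_mono)
    show "norm (a n p) \<le> Ca * real n powr sg * real p powr sg" using Ca_bnd[OF n1 p] .
    have "Ca * real p powr sg * real n powr sg * Zs n (2 + real l) \<le> Ca * real p powr sg * real n powr sg * Zs n 2"
      using Zs_mono2[OF n1] Ca_nonneg by (intro mult_left_mono) auto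
    then show "norm (bt l p - a n p) \<le> Ca * real p powr sg * real n powr sg * Zs n 2"
      using bt_near[OF p, of l] by linarith
  qed
  also have "\<dots> = Cb * real p powr sg" unfolding Cb_def by (simp add: algebra_simps)
  finally show ?thesis .
qed

lemma FF_near: "norm (FF q l - bt l n) \<le> Cb * real n powr sg * Zs n (2 + real q)"
proof -
  have "norm (complex_of_real (real n powr tau q) * (\<Sum>i. bt l (i + n) * npow (i + n) (of_real (tau q))) - bt l n)
     \<le> Cb * real n powr sg * Zs n (tau q - sg)"
    using SE(2)[of "bt l", OF bt_bnd n1] tau_ge by blast
  then show ?thesis unfolding FF_def cf_def et_def tau_sg by simp
qed

definition "W x = Cb * real n powr sg * Zs n (2 + real x) + Ca * real n powr sg * real n powr sg * Zs n (2 + real x)"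

lemma W_nonneg: "W x \<ge> 0"
proof -
  have "Ca \<ge> 0" "Cb \<ge> 0" "Zs n (2 + real x) \<ge> 0" using Ca_nonneg Zs_nonneg[OF n1] Zs_nonneg[OF n1, of 2]
    unfolding Cb_def by auto
  then show ?thesis unfolding W_def by simp
qed

lemma W_lim: "W \<longlonglongrightarrow> 0"
proof -
  have "(\<lambda>x. Cb * real n powr sg * Zs n (2 + real x) + Ca * real n powr sg * real n powr sg * Zs n (2 + real x))
    \<longlonglongrightarrow> Cb * real n powr sg * 0 + Ca * real n powr sg * real n powr sg * 0"
    by (intro tendsto_intros Zs_tendsto n1)
  then show ?thesis unfolding W_def[abs_def] by simp
qed

lemma FF_ann: "norm (FF q l - a n n) \<le> W q + W l"
proof -
  have z: "Zs n (2 + real x) \<ge> 0" for x using Zs_nonneg[OF n1] by simp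
  have "norm (FF q l - a n n) \<le> norm (FF q l - bt l n) + norm (bt l n - a n n)"
    by (metis diff_add_cancel norm_triangle_ineq add_diff_eq)
  also have "\<dots> \<le> Cb * real n powr sg * Zs n (2 + real q) + Ca * real n powr sg * real n powr sg * Zs n (2 + real l)"
    using FF_near bt_near[OF n1] by (intro add_mono) auto
  also have "\<dots> \<le> W q + W l"
  proof -
    have c: "Ca \<ge> 0" "Cb \<ge> 0" using Ca_nonneg Zs_nonneg[OF n1, of 2] unfolding Cb_def by auto
    have "0 \<le> Ca * real n powr sg * real n powr sg * Zs n (2 + real q)" using c z[of q] by simp
    then have "Cb * real n powr sg * Zs n (2 + real q) \<le> W q" unfolding W_def by linarith
    moreover have "0 \<le> Cb * real n powr sg * Zs n (2 + real l)" using c z[of l] by simp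
    then have "Ca * real n powr sg * real n powr sg * Zs n (2 + real l) \<le> W l" unfolding W_def by linarith
    ultimately show ?thesis by linarith
  qed
  finally show ?thesis .
qed

lemma gg_cauchy: "\<forall>e>0. \<exists>N. \<forall>m\<ge>N. \<forall>l\<ge>N. ipnorm ip (\<lambda>x. gg n m x - gg n l x) < e"
proof (intro allI impI)
  fix e :: real assume e: "e > 0"
  have "eventually (\<lambda>x. W x < e\<^sup>2 / 8) sequentially"
    using W_lim e by (intro order_tendstoD(2)) auto
  then obtain N where N: "\<And>x. x \<ge> N \<Longrightarrow> W x < e\<^sup>2 / 8" unfolding eventually_sequentially by blast
  show "\<exists>N. \<forall>m\<ge>N. \<forall>l\<ge>N. ipnorm ip (\<lambda>x. gg n m x - gg n l x) < e"
  proof (intro exI allI impI)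
    fix q l assume ql: "q \<ge> N" "l \<ge> N"
    have "(ipnorm ip (\<lambda>x. gg n q x - gg n l x))\<^sup>2 = Re (FF q q - FF q l - FF l q + FF l l)"
      using ipnorm_sq_expand[OF gg_H gg_H] ip_gg by simp
    also have "FF q q - FF q l - FF l q + FF l l =
        (FF q q - a n n) - (FF q l - a n n) - (FF l q - a n n) + (FF l l - a n n)" by simp
    also have "Re \<dots> \<le> norm \<dots>" by (rule complex_Re_le_cmod)
    also have "\<dots> \<le> norm (FF q q - a n n) + norm (FF q l - a n n) + norm (FF l q - a n n) + norm (FF l l - a n n)"
      using norm_triangle_ineq[of "(FF q q - a n n) - (FF q l - a n n) - (FF l q - a n n)" "FF l l - a n n"]
        norm_triangle_ineq4[of "(FF q q - a n n) - (FF q l - a n n)" "FF l q - a n n"]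
        norm_triangle_ineq4[of "FF q q - a n n" "FF q l - a n n"] by linarith
    also have "\<dots> \<le> (W q + W q) + (W q + W l) + (W l + W q) + (W l + W l)"
      by (intro add_mono FF_ann)
    also have "\<dots> < e\<^sup>2" using N[OF ql(1)] N[OF ql(2)] by linarith
    finally have "(ipnorm ip (\<lambda>x. gg n q x - gg n l x))\<^sup>2 < e\<^sup>2" .
    then show "ipnorm ip (\<lambda>x. gg n q x - gg n l x) < e"
      using e by (simp add: power_less_imp_less_base)
  qed
qed

lemma gg_lim_pt: assumes s: "s \<in> halfplane \<rho>" shows "(\<lambda>q. gg n q s) \<longlonglongrightarrow> Am a k n s"
proof -
  have "convergent (\<lambda>N. \<Sum>p=1..N. Am a k p s * npow p (of_real sg))"
    using K1c[OF s sg_in] unfolding convergent_def by auto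
  from conv_bound[OF this] obtain C where C0: "\<forall>p\<ge>1. norm (Am a k p s) \<le> C * real p powr sg"
    by blast
  then have C: "\<And>p. p \<ge> 1 \<Longrightarrow> norm (Am a k p s) \<le> C * real p powr sg" by blast
  have S: "(\<lambda>N. \<Sum>p=1..N. Am a k p s * npow p (of_real (sg + 2 + real q))) \<longlonglongrightarrow> dkernel a s (complex_of_real (tau q))" for q
    using K1c[OF s tau_in[of q]] unfolding tau_sg by simp
  have "(\<lambda>q. complex_of_real (real n powr (sg + 2 + real q)) *
      (dkernel a s (complex_of_real (tau q)) - (\<Sum>p\<in>{1..<n}. Am a k p s * npow p (of_real (sg + 2 + real q))))) \<longlonglongrightarrow> Am a k n s"
    by (rule tail_lim[OF C n1 S])
  then show ?thesis unfolding gg_eval[OF s] cf_def et_def tau_sg by (simp add: ac_simps)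
qed

definition "hlim = (SOME h. h \<in> H \<and> (\<lambda>q. ipnorm ip (\<lambda>x. gg n q x - h x)) \<longlonglongrightarrow> 0)"

lemma hlim_prop: "hlim \<in> H \<and> (\<lambda>q. ipnorm ip (\<lambda>x. gg n q x - hlim x)) \<longlonglongrightarrow> 0"
proof -
  have "\<exists>h\<in>H. (\<lambda>q. ipnorm ip (\<lambda>x. gg n q x - h x)) \<longlonglongrightarrow> 0"
    using complete[OF gg_H gg_cauchy] .
  then have ex: "\<exists>h. h \<in> H \<and> (\<lambda>q. ipnorm ip (\<lambda>x. gg n q x - h x)) \<longlonglongrightarrow> 0" by blast
  show ?thesis unfolding hlim_def by (rule someI_ex[OF ex])
qed

lemma hlim_eq: "hlim = Ah n"
proof
  fix s
  show "hlim s = Ah n s"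
  proof (cases "s \<in> halfplane \<rho>")
    case True
    have ks: "kfun (halfplane \<rho>) (dkernel a) s \<in> H" using kfun_H True by blast
    have "(\<lambda>q. ip (gg n q) (kfun (halfplane \<rho>) (dkernel a) s)) \<longlonglongrightarrow> ip hlim (kfun (halfplane \<rho>) (dkernel a) s)"
      using gg_H hlim_prop ks by (intro ip_cont1) auto
    moreover have "ip (gg n q) (kfun (halfplane \<rho>) (dkernel a) s) = gg n q s" for q
      using repro[OF True gg_H] by simp
    ultimately have "(\<lambda>q. gg n q s) \<longlonglongrightarrow> ip hlim (kfun (halfplane \<rho>) (dkernel a) s)" by simp
    then have "ip hlim (kfun (halfplane \<rho>) (dkernel a) s) = Am a k n s"
      using gg_lim_pt[OF True] LIMSEQ_unique by blast
    then show ?thesis using repro[OF True] hlim_prop Ah_eval[OF True] by simp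
  next
    case False
    have "hlim s = 0" using vanish[of hlim s] hlim_prop False by blast
    then show ?thesis using False unfolding Ah_def by simp
  qed
qed

lemma Ah_H: "Ah n \<in> H" using hlim_prop hlim_eq by simp
lemma Ah_lim: "(\<lambda>q. ipnorm ip (\<lambda>x. gg n q x - Ah n x)) \<longlonglongrightarrow> 0" using hlim_prop hlim_eq by simp

lemma Ah_K: "ip (Kt q') (Ah n) = Bm a k n (complex_of_real (tau q'))"
proof -
  have l1: "(\<lambda>l. ip (Kt q') (gg n l)) \<longlonglongrightarrow> ip (Kt q') (Ah n)"
    using gg_H Ah_H Kt_H Ah_lim by (intro ip_cont2)
  have e: "ip (Kt q') (gg n l) = cf n l * (dkernel a (complex_of_real (tau l)) (complex_of_real (tau q'))
      - (\<Sum>j\<in>{1..<n}. Bm a k j (complex_of_real (tau q')) * npow j (of_real (sg + 2 + real l))))" for l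
  proof -
    have d: "(\<lambda>x. Kt l x - Sq l x) \<in> H" using Kt_H Sq_H by (rule diff_H)
    have "ip (Kt q') (gg n l) = cnj (cf n l) * ip (Kt q') (\<lambda>x. Kt l x - Sq l x)"
      unfolding gg_alt using Kt_H d by (rule ip_scale2)
    also have "ip (Kt q') (\<lambda>x. Kt l x - Sq l x) = ip (Kt q') (Kt l) - ip (Kt q') (Sq l)"
      using Kt_H Sq_H Kt_H by (rule ip_diff2)
    finally show ?thesis unfolding Kt_Kt ip_Kt_S cnj_cf et_def tau_sg by (simp add: ac_simps)
  qed
  have "convergent (\<lambda>M. \<Sum>m=1..M. Bm a k m (complex_of_real (tau q')) * npow m (of_real sg))"
    using K2c[OF sg_in tau_in[of q']] unfolding convergent_def by auto
  from conv_bound[OF this] obtain C where C0: "\<forall>p\<ge>1. norm (Bm a k p (complex_of_real (tau q'))) \<le> C * real p powr sg"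
    by blast
  then have C: "\<And>p. p \<ge> 1 \<Longrightarrow> norm (Bm a k p (complex_of_real (tau q'))) \<le> C * real p powr sg" by blast
  have S: "(\<lambda>M. \<Sum>m=1..M. Bm a k m (complex_of_real (tau q')) * npow m (of_real (sg + 2 + real l)))
      \<longlonglongrightarrow> dkernel a (complex_of_real (tau l)) (complex_of_real (tau q'))" for l
    using K2c[OF tau_in[of l] tau_in[of q']] unfolding tau_sg by simp
  have "(\<lambda>l. complex_of_real (real n powr (sg + 2 + real l)) * (dkernel a (complex_of_real (tau l)) (complex_of_real (tau q'))
      - (\<Sum>p\<in>{1..<n}. Bm a k p (complex_of_real (tau q')) * npow p (of_real (sg + 2 + real l))))) \<longlonglongrightarrow> Bm a k n (complex_of_real (tau q'))"
    by (rule tail_lim[OF C n1 S])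
  then have "(\<lambda>l. ip (Kt q') (gg n l)) \<longlonglongrightarrow> Bm a k n (complex_of_real (tau q'))"
    unfolding e cf_def tau_sg .
  then show ?thesis using l1 LIMSEQ_unique by blast
qed

lemma Ah_G1: assumes j: "j \<in> {1..<n}" shows "ip (Ah n) (Ah j) = a j n"
proof -
  have jH: "Ah j \<in> H" using hH j by blast
  have l1: "(\<lambda>l. ip (gg n l) (Ah j)) \<longlonglongrightarrow> ip (Ah n) (Ah j)"
    using gg_H Ah_H jH Ah_lim by (intro ip_cont1)
  have e: "ip (gg n l) (Ah j) = cf n l * (Bm a k j (complex_of_real (tau l))
      - (\<Sum>i\<in>{1..<n}. a j i * npow i (of_real (sg + 2 + real l))))" for l
  proof -
    have d: "(\<lambda>x. Kt l x - Sq l x) \<in> H" using Kt_H Sq_H by (rule diff_H)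
    have "ip (gg n l) (Ah j) = cf n l * ip (\<lambda>x. Kt l x - Sq l x) (Ah j)"
      unfolding gg_alt using d jH by (rule ip_scale1)
    also have "ip (\<lambda>x. Kt l x - Sq l x) (Ah j) = ip (Kt l) (Ah j) - ip (Sq l) (Ah j)"
      using Kt_H Sq_H jH by (rule ip_diff1)
    also have "ip (Sq l) (Ah j) = (\<Sum>i\<in>{1..<n}. et i l * ip (Ah i) (Ah j))"
      unfolding Sq_def using hH jH by (intro ip_sum1) auto
    also have "\<dots> = (\<Sum>i\<in>{1..<n}. a j i * npow i (of_real (sg + 2 + real l)))"
      using hG j unfolding et_def tau_sg by (intro sum.cong refl) (simp add: ac_simps)
    finally show ?thesis using hK[OF j] by simp
  qed
  have C: "\<And>p. p \<ge> 1 \<Longrightarrow> norm (a j p) \<le> (Ca * real j powr sg) * real p powr sg"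
    using Ca_bnd j by auto
  have S: "(\<lambda>N. \<Sum>p=1..N. a j p * npow p (of_real (sg + 2 + real l))) \<longlonglongrightarrow> Bm a k j (complex_of_real (tau l))" for l
    using Bm_conv unfolding tau_sg by simp
  have "(\<lambda>l. complex_of_real (real n powr (sg + 2 + real l)) * (Bm a k j (complex_of_real (tau l))
      - (\<Sum>p\<in>{1..<n}. a j p * npow p (of_real (sg + 2 + real l))))) \<longlonglongrightarrow> a j n"
    by (rule tail_lim[OF C n1 S])
  then have "(\<lambda>l. ip (gg n l) (Ah j)) \<longlonglongrightarrow> a j n" unfolding e cf_def tau_sg .
  then show ?thesis using l1 LIMSEQ_unique by blast
qed

lemma Ah_G2: assumes i: "i \<in> {1..n}" shows "ip (Ah i) (Ah n) = a n i"
proof -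
  have iH: "Ah i \<in> H" using hH i Ah_H by (cases "i = n") auto
  have hij: "ip (Ah i) (Ah j) = a j i" if j: "j \<in> {1..<n}" for j
    using hG[of i j] Ah_G1[OF j] i j by (cases "i = n") auto
  have l1: "(\<lambda>l. ip (Ah i) (gg n l)) \<longlonglongrightarrow> ip (Ah i) (Ah n)"
    using gg_H Ah_H iH Ah_lim by (intro ip_cont2)
  have e: "ip (Ah i) (gg n l) = cf n l * (Am a k i (complex_of_real (tau l))
      - (\<Sum>j\<in>{1..<n}. a j i * npow j (of_real (sg + 2 + real l))))" for l
  proof -
    have d: "(\<lambda>x. Kt l x - Sq l x) \<in> H" using Kt_H Sq_H by (rule diff_H)
    have "ip (Ah i) (gg n l) = cnj (cf n l) * ip (Ah i) (\<lambda>x. Kt l x - Sq l x)"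
      unfolding gg_alt using iH d by (rule ip_scale2)
    also have "ip (Ah i) (\<lambda>x. Kt l x - Sq l x) = ip (Ah i) (Kt l) - ip (Ah i) (Sq l)"
      using Kt_H Sq_H iH by (rule ip_diff2)
    also have "ip (Ah i) (Sq l) = (\<Sum>j\<in>{1..<n}. cnj (et j l) * ip (Ah i) (Ah j))"
      unfolding Sq_def using hH iH by (intro ip_sum2) auto
    also have "\<dots> = (\<Sum>j\<in>{1..<n}. a j i * npow j (of_real (sg + 2 + real l)))"
      using hij unfolding cnj_et unfolding et_def tau_sg by (intro sum.cong refl) (simp add: ac_simps)
    finally show ?thesis using Ah_Kt[OF iH] cnj_cf by simp
  qed
  have C: "\<And>m. m \<ge> 1 \<Longrightarrow> norm (a m i) \<le> (Ca * real i powr sg) * real m powr sg"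
    using Ca_bnd i by (auto simp: ac_simps)
  have S: "(\<lambda>N. \<Sum>m=1..N. a m i * npow m (of_real (sg + 2 + real l))) \<longlonglongrightarrow> Am a k i (complex_of_real (tau l))" for l
    using Am_conv unfolding tau_sg by simp
  have "(\<lambda>l. complex_of_real (real n powr (sg + 2 + real l)) * (Am a k i (complex_of_real (tau l))
      - (\<Sum>p\<in>{1..<n}. a p i * npow p (of_real (sg + 2 + real l))))) \<longlonglongrightarrow> a n i"
    by (rule tail_lim[OF C n1 S])
  then have "(\<lambda>l. ip (Ah i) (gg n l)) \<longlonglongrightarrow> a n i" unfolding e cf_def tau_sg .
  then show ?thesis using l1 LIMSEQ_unique by blast
qed

end
end

lemma npow_cnj: "npow n (cnj w) = cnj (npow n w)"
  unfolding npow_def by (subst cnj_powr) auto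

context dk
begin

lemma all_Ah: "\<forall>j\<in>{1..n}. Ah j \<in> H \<and> (\<forall>q. ip (Kt q) (Ah j) = Bm a k j (complex_of_real (tau q)))
    \<and> (\<forall>i\<in>{1..n}. ip (Ah i) (Ah j) = a j i)"
proof (induction n)
  case 0 then show ?case by simp
next
  case (Suc n)
  define m where "m = Suc n"
  have IH: "\<And>j. j \<in> {1..<m} \<Longrightarrow> Ah j \<in> H \<and> (\<forall>q. ip (Kt q) (Ah j) = Bm a k j (complex_of_real (tau q)))
    \<and> (\<forall>i\<in>{1..<m}. ip (Ah i) (Ah j) = a j i)" using Suc.IH unfolding m_def by auto
  have m1: "m \<ge> 1" unfolding m_def by simp
  have hH: "\<And>j. j \<in> {1..<m} \<Longrightarrow> Ah j \<in> H" using IH by blast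
  have hK: "\<And>j q. j \<in> {1..<m} \<Longrightarrow> ip (Kt q) (Ah j) = Bm a k j (complex_of_real (tau q))" using IH by blast
  have hG: "\<And>i j. i \<in> {1..<m} \<Longrightarrow> j \<in> {1..<m} \<Longrightarrow> ip (Ah i) (Ah j) = a j i" using IH by blast
  have AH: "Ah m \<in> H" by (rule Ah_H[OF m1 hH hK hG]) auto
  have AK: "\<And>q. ip (Kt q) (Ah m) = Bm a k m (complex_of_real (tau q))" by (rule Ah_K[OF m1 hH hK hG]) auto
  have AG1: "\<And>j. j \<in> {1..<m} \<Longrightarrow> ip (Ah m) (Ah j) = a j m" by (rule Ah_G1[OF m1 hH hK hG]) auto
  have AG2: "\<And>i. i \<in> {1..m} \<Longrightarrow> ip (Ah i) (Ah m) = a m i" by (rule Ah_G2[OF m1 hH hK hG]) auto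
  show ?case unfolding m_def[symmetric]
  proof
    fix j assume j: "j \<in> {1..m}"
    show "Ah j \<in> H \<and> (\<forall>q. ip (Kt q) (Ah j) = Bm a k j (complex_of_real (tau q))) \<and> (\<forall>i\<in>{1..m}. ip (Ah i) (Ah j) = a j i)"
    proof (cases "j = m")
      case True
      then show ?thesis using AH AK AG2 by simp
    next
      case False
      then have j': "j \<in> {1..<m}" using j by auto
      have "\<forall>i\<in>{1..m}. ip (Ah i) (Ah j) = a j i"
      proof
        fix i assume i: "i \<in> {1..m}"
        show "ip (Ah i) (Ah j) = a j i"
        proof (cases "i = m")
          case True then show ?thesis using AG1[OF j'] by simp
        next
          case False then show ?thesis using hG[OF _ j'] i by auto
        qed
      qed
      then show ?thesis using IH[OF j'] by blast
    qed
  qed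
qed

lemma AhH: "n \<ge> 1 \<Longrightarrow> Ah n \<in> H" using all_Ah[of n] by auto
lemma AhG: "i \<ge> 1 \<Longrightarrow> j \<ge> 1 \<Longrightarrow> ip (Ah i) (Ah j) = a j i" using all_Ah[of "max i j"] by auto

definition "SN w N = (\<lambda>x. \<Sum>n\<in>{1..N}. cnj (npow n w) * Ah n x)"

lemma SN_H: "SN w N \<in> H" unfolding SN_def using AhH by (intro sum_H) auto

lemma SN_lim: assumes w: "w \<in> halfplane \<rho>"
  shows "(\<lambda>N. ipnorm ip (\<lambda>x. SN w N x - kfun (halfplane \<rho>) (dkernel a) w x)) \<longlonglongrightarrow> 0"
proof -
  define Kw where "Kw = kfun (halfplane \<rho>) (dkernel a) w"
  define \<kappa> where "\<kappa> = dkernel a w w"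
  have KwH: "Kw \<in> H" unfolding Kw_def using kfun_H w by blast
  have kk: "ip Kw Kw = \<kappa>" using repro[OF w KwH] unfolding Kw_def \<kappa>_def kfun_def using w by simp
  have "\<kappa> = complex_of_real ((ipnorm ip Kw)\<^sup>2)" using kk ip_self[OF KwH] by simp
  then have kreal: "cnj \<kappa> = \<kappa>" by simp
  have SK: "ip (SN w N) Kw = (\<Sum>n=1..N. Am a k n w * npow n (cnj w))" for N
  proof -
    have "ip (SN w N) Kw = (\<Sum>n\<in>{1..N}. cnj (npow n w) * ip (Ah n) Kw)"
      unfolding SN_def using AhH KwH by (intro ip_sum1) auto
    also have "\<dots> = (\<Sum>n=1..N. Am a k n w * npow n (cnj w))"
    proof (intro sum.cong refl)
      fix n assume n: "n \<in> {1..N}"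
      have "ip (Ah n) Kw = Ah n w" using repro[OF w AhH, of n] n unfolding Kw_def by simp
      then show "cnj (npow n w) * ip (Ah n) Kw = Am a k n w * npow n (cnj w)"
        using Ah_eval[OF w] npow_cnj by simp
    qed
    finally show ?thesis .
  qed
  have SS: "ip (SN w N) (SN w N) = dpsum a w (cnj w) (N, N)" for N
  proof -
    have "ip (SN w N) (SN w N) = (\<Sum>n\<in>{1..N}. cnj (npow n w) * ip (Ah n) (SN w N))"
      unfolding SN_def[of w N] using AhH SN_H[unfolded SN_def] by (intro ip_sum1) auto
    also have "\<dots> = (\<Sum>n\<in>{1..N}. cnj (npow n w) * (\<Sum>m\<in>{1..N}. npow m w * a m n))"
    proof (intro sum.cong refl)
      fix n assume n: "n \<in> {1..N}"
      have "ip (Ah n) (SN w N) = (\<Sum>m\<in>{1..N}. cnj (cnj (npow m w)) * ip (Ah n) (Ah m))"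
        unfolding SN_def using AhH n by (intro ip_sum2) auto
      also have "\<dots> = (\<Sum>m\<in>{1..N}. npow m w * a m n)" using AhG n by (intro sum.cong refl) auto
      finally show "cnj (npow n w) * ip (Ah n) (SN w N) = cnj (npow n w) * (\<Sum>m\<in>{1..N}. npow m w * a m n)" by simp
    qed
    also have "\<dots> = (\<Sum>n\<in>{1..N}. \<Sum>m\<in>{1..N}. a m n * npow m w * npow n (cnj w))"
      by (simp add: sum_distrib_left npow_cnj ac_simps)
    also have "\<dots> = (\<Sum>m\<in>{1..N}. \<Sum>n\<in>{1..N}. a m n * npow m w * npow n (cnj w))" by (rule sum.swap)
    finally show ?thesis unfolding dpsum_def by simp
  qed
  have l1: "(\<lambda>N. ip (SN w N) (SN w N)) \<longlonglongrightarrow> \<kappa>" unfolding SS \<kappa>_def using KD[OF dsk w w] .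
  have l2: "(\<lambda>N. ip (SN w N) Kw) \<longlonglongrightarrow> \<kappa>" unfolding SK \<kappa>_def using K1c[OF w w] .
  have l3: "(\<lambda>N. ip Kw (SN w N)) \<longlonglongrightarrow> cnj \<kappa>"
    using tendsto_cnj[OF l2] herm[OF KwH SN_H] by simp
  have "(\<lambda>N. Re (ip (SN w N) (SN w N) - ip (SN w N) Kw - ip Kw (SN w N) + ip Kw Kw)) \<longlonglongrightarrow> Re (\<kappa> - \<kappa> - cnj \<kappa> + \<kappa>)"
    unfolding kk by (intro tendsto_intros l1 l2 l3)
  then have "(\<lambda>N. Re (ip (SN w N) (SN w N) - ip (SN w N) Kw - ip Kw (SN w N) + ip Kw Kw)) \<longlonglongrightarrow> 0"
    using kreal by simp
  then show ?thesis unfolding Kw_def[symmetric] using SN_H KwH by (intro ipnorm_tendsto0)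
qed

lemma total: "\<forall>f\<in>H. (\<forall>n. ip f (Ah (Suc n)) = 0) \<longrightarrow> f = (\<lambda>x. 0)"
proof (intro ballI impI)
  fix f assume f: "f \<in> H" and o: "\<forall>n. ip f (Ah (Suc n)) = 0"
  have o': "ip f (Ah n) = 0" if "n \<ge> 1" for n using o[rule_format, of "n - 1"] that by simp
  show "f = (\<lambda>x. 0)"
  proof
    fix w show "f w = 0"
    proof (cases "w \<in> halfplane \<rho>")
      case True
      have KwH: "kfun (halfplane \<rho>) (dkernel a) w \<in> H" using kfun_H True by blast
      have "(\<lambda>N. ip f (SN w N)) \<longlonglongrightarrow> ip f (kfun (halfplane \<rho>) (dkernel a) w)"
        using SN_H KwH f SN_lim[OF True] by (intro ip_cont2)
      moreover have "ip f (SN w N) = 0" for N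
      proof -
        have "ip f (SN w N) = (\<Sum>n\<in>{1..N}. cnj (cnj (npow n w)) * ip f (Ah n))"
          unfolding SN_def using AhH f by (intro ip_sum2) auto
        also have "\<dots> = 0" using o' by simp
        finally show ?thesis .
      qed
      ultimately have "(\<lambda>N. 0) \<longlonglongrightarrow> ip f (kfun (halfplane \<rho>) (dkernel a) w)" by simp
      then have "ip f (kfun (halfplane \<rho>) (dkernel a) w) = 0" by (simp add: LIMSEQ_const_iff)
      then show ?thesis using repro[OF True f] by simp
    next
      case False show ?thesis by (rule vanish[OF f False])
    qed
  qed
qed

end

lemma sum_upto_restrict: fixes N1 N :: nat shows "N1 \<le> N \<Longrightarrow> (\<Sum>n=1..N. if n \<le> N1 then g n else (0::complex)) = (\<Sum>n=1..N1. g n)"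
proof -
  assume N: "N1 \<le> N"
  have "(\<Sum>n=1..N. if n \<le> N1 then g n else 0) = (\<Sum>n\<in>{n\<in>{1..N}. n \<le> N1}. g n)"
    by (rule sum.inter_filter[symmetric]) simp
  also have "{n\<in>{1..N}. n \<le> N1} = {1..N1}" using N by auto
  finally show ?thesis .
qed

lemma dp_zero: "dirichlet_poly_on \<Omega> (\<lambda>x. 0)"
  unfolding dirichlet_poly_on_def by (rule exI[of _ 0]) simp

lemma dp_add: assumes "dirichlet_poly_on \<Omega> f" "dirichlet_poly_on \<Omega> g"
  shows "dirichlet_poly_on \<Omega> (\<lambda>x. f x + g x)"
proof -
  obtain N1 c1 where 1: "\<forall>s\<in>\<Omega>. f s = (\<Sum>n=1..N1. c1 n * npow n s)" using assms(1) unfolding dirichlet_poly_on_def by blast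
  obtain N2 c2 where 2: "\<forall>s\<in>\<Omega>. g s = (\<Sum>n=1..N2. c2 n * npow n s)" using assms(2) unfolding dirichlet_poly_on_def by blast
  define N where "N = max N1 N2"
  define c where "c n = (if n \<le> N1 then c1 n else 0) + (if n \<le> N2 then c2 n else 0)" for n
  have "f s + g s = (\<Sum>n=1..N. c n * npow n s)" if s: "s \<in> \<Omega>" for s
  proof -
    have "(\<Sum>n=1..N. c n * npow n s) = (\<Sum>n=1..N. (if n \<le> N1 then c1 n * npow n s else 0)) + (\<Sum>n=1..N. (if n \<le> N2 then c2 n * npow n s else 0))"
    proof -
      have "c n * npow n s = (if n \<le> N1 then c1 n * npow n s else 0) + (if n \<le> N2 then c2 n * npow n s else 0)" for n
        unfolding c_def by (simp add: distrib_right)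
      then show ?thesis by (simp add: sum.distrib)
    qed
    also have "\<dots> = (\<Sum>n=1..N1. c1 n * npow n s) + (\<Sum>n=1..N2. c2 n * npow n s)"
      unfolding N_def by (intro arg_cong2[where f="(+)"] sum_upto_restrict) auto
    finally show ?thesis using 1 2 s by simp
  qed
  then show ?thesis unfolding dirichlet_poly_on_def by blast
qed

lemma dp_scale: assumes "dirichlet_poly_on \<Omega> f" shows "dirichlet_poly_on \<Omega> (\<lambda>x. c * f x)"
proof -
  obtain N c1 where 1: "\<forall>s\<in>\<Omega>. f s = (\<Sum>n=1..N. c1 n * npow n s)" using assms unfolding dirichlet_poly_on_def by blast
  have "\<forall>s\<in>\<Omega>. c * f s = (\<Sum>n=1..N. (c * c1 n) * npow n s)" using 1 by (simp add: sum_distrib_left mult.assoc)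
  then show ?thesis unfolding dirichlet_poly_on_def by (intro exI[of _ N] exI[of _ "\<lambda>n. c * c1 n"])
qed

lemma dp_sum: "finite S \<Longrightarrow> (\<forall>e\<in>S. dirichlet_poly_on \<Omega> e) \<Longrightarrow> dirichlet_poly_on \<Omega> (\<lambda>x. \<Sum>e\<in>S. c e * e x)"
proof (induction S rule: finite_induct)
  case empty then show ?case using dp_zero by simp
next
  case (insert j S)
  then have "dirichlet_poly_on \<Omega> (\<lambda>x. c j * j x + (\<Sum>e\<in>S. c e * e x))" by (intro dp_add dp_scale) auto
  then show ?case using insert by simp
qed

lemma Am_sums0: "k_diagonal k a \<Longrightarrow> (\<lambda>m. a m p * npow m s) sums Am a k p s"
proof -
  assume kd: "k_diagonal k a"
  have "(\<lambda>m. a m p * npow m s) sums (\<Sum>m\<in>{1..p+k}. a m p * npow m s)"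
  proof (rule sums_finite)
    fix m assume "m \<notin> {1..p+k}"
    then have "m = 0 \<or> m > p + k" by auto
    then show "a m p * npow m s = 0" using band1[OF kd] by auto
  qed simp
  then show ?thesis unfolding Am_def by simp
qed

lemma symbol_eq: "k_diagonal k a \<Longrightarrow> symbol a n s = Am a k n s"
proof -
  assume kd: "k_diagonal k a"
  have "(\<lambda>m. a (Suc m) n * npow (Suc m) s) sums (Am a k n s - a 0 n * npow 0 s)"
    using Am_sums0[OF kd] by (subst sums_Suc_iff) simp
  then show ?thesis unfolding symbol_def by (simp add: sums_iff)
qed

lemma dp_Am: "dirichlet_poly_on \<Omega> (\<lambda>s. Am a k n s)"
  unfolding dirichlet_poly_on_def Am_def by (intro exI[of _ "n + k"] exI[of _ "\<lambda>m. a m n"]) simp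

context dk
begin

lemma dp_Ah: "dirichlet_poly_on (halfplane \<rho>) (Ah n)"
  using dp_Am[of "halfplane \<rho>" a k n] unfolding dirichlet_poly_on_def Ah_def by auto

lemma onb: "\<exists>B. orthonormal_basis H ip B \<and> (\<forall>e\<in>B. dirichlet_poly_on (halfplane \<rho>) e)"
proof -
  interpret G: rkv "halfplane \<rho>" H ip "dkernel a" "\<lambda>n. Ah (Suc n)"
    by unfold_locales (simp add: AhH)
  define B where "B = {G.u j | j. G.u j \<noteq> (\<lambda>x. 0)}"
  have Bm: "e \<in> B \<Longrightarrow> \<exists>j. e = G.u j \<and> G.u j \<noteq> (\<lambda>x. 0)" for e unfolding B_def by simp
  have BH: "B \<subseteq> H"
  proof
    fix e assume "e \<in> B"
    then obtain j where "e = G.u j" using Bm by blast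
    then show "e \<in> H" using G.uH by simp
  qed
  have B1: "\<forall>e\<in>B. ip e e = 1"
  proof
    fix e assume "e \<in> B"
    then obtain j where "e = G.u j" "G.u j \<noteq> (\<lambda>x. 0)" using Bm by blast
    then show "ip e e = 1" using G.u_unit by simp
  qed
  have B2: "\<forall>e\<in>B. \<forall>e'\<in>B. e \<noteq> e' \<longrightarrow> ip e e' = 0"
  proof (intro ballI impI)
    fix e e' assume "e \<in> B" "e' \<in> B" "e \<noteq> e'"
    then obtain i j where "e = G.u i" "e' = G.u j" "i \<noteq> j" using Bm by blast
    then show "ip e e' = 0" using G.u_orth by simp
  qed
  have inj: "inj_on G.u {j. j < N \<and> G.u j \<noteq> (\<lambda>x. 0)}" for N
  proof (rule inj_onI)
    fix i j assume i: "i \<in> {j. j < N \<and> G.u j \<noteq> (\<lambda>x. 0)}" and j: "j \<in> {j. j < N \<and> G.u j \<noteq> (\<lambda>x. 0)}"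
      and e: "G.u i = G.u j"
    show "i = j"
    proof (rule ccontr)
      assume "i \<noteq> j"
      then have "ip (G.u i) (G.u j) = 0" by (rule G.u_orth)
      moreover have "ip (G.u i) (G.u i) = 1" using G.u_unit i by blast
      ultimately show False using e by simp
    qed
  qed
  have dens: "\<forall>f\<in>H. \<forall>\<epsilon>>0. \<exists>g\<in>fspan B. ipnorm ip (\<lambda>x. f x - g x) < \<epsilon>"
  proof (intro ballI allI impI)
    fix f :: "complex \<Rightarrow> complex" and \<epsilon> :: real assume f: "f \<in> H" and e: "\<epsilon> > 0"
    obtain N where N: "ipnorm ip (\<lambda>x. f x - (\<Sum>j<N. ip f (G.u j) * G.u j x)) < \<epsilon>"
      using G.density[OF total f e] by blast
    define J where "J = {j. j < N \<and> G.u j \<noteq> (\<lambda>x. 0)}"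
    define cc where "cc e = ip f (G.u (the_inv_into J G.u e))" for e
    have Jf: "finite J" unfolding J_def by simp
    have "(\<lambda>x. \<Sum>j<N. ip f (G.u j) * G.u j x) = (\<lambda>x. \<Sum>j\<in>J. ip f (G.u j) * G.u j x)"
    proof
      fix x
      show "(\<Sum>j<N. ip f (G.u j) * G.u j x) = (\<Sum>j\<in>J. ip f (G.u j) * G.u j x)"
        unfolding J_def
      proof (rule sum.mono_neutral_right)
        show "\<forall>i\<in>{..<N} - {j. j < N \<and> G.u j \<noteq> (\<lambda>x. 0)}. ip f (G.u i) * G.u i x = 0"
        proof
          fix i assume "i \<in> {..<N} - {j. j < N \<and> G.u j \<noteq> (\<lambda>x. 0)}"
          then have "G.u i = (\<lambda>x. 0)" by simp
          then show "ip f (G.u i) * G.u i x = 0" by simp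
        qed
      qed auto
    qed
    also have "\<dots> = (\<lambda>x. \<Sum>e\<in>G.u ` J. cc e * e x)"
    proof
      fix x
      have "(\<Sum>e\<in>G.u ` J. cc e * e x) = (\<Sum>j\<in>J. cc (G.u j) * G.u j x)"
        using inj[of N] unfolding J_def by (rule sum.reindex_cong[OF _ refl]) simp
      also have "\<dots> = (\<Sum>j\<in>J. ip f (G.u j) * G.u j x)"
        unfolding cc_def using the_inv_into_f_f[OF inj[of N]] unfolding J_def by simp
      finally show "(\<Sum>j\<in>J. ip f (G.u j) * G.u j x) = (\<Sum>e\<in>G.u ` J. cc e * e x)" by simp
    qed
    finally have eq: "(\<lambda>x. \<Sum>j<N. ip f (G.u j) * G.u j x) = (\<lambda>x. \<Sum>e\<in>G.u ` J. cc e * e x)" .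
    have inF: "(\<lambda>x. \<Sum>e\<in>G.u ` J. cc e * e x) \<in> fspan B"
    proof -
      have "G.u ` J \<subseteq> B" unfolding B_def J_def by blast
      moreover have "finite (G.u ` J)" using Jf by simp
      ultimately show ?thesis unfolding fspan_def by blast
    qed
    have lt: "ipnorm ip (\<lambda>x. f x - (\<Sum>e\<in>G.u ` J. cc e * e x)) < \<epsilon>"
    proof -
      have eqx: "(\<Sum>j<N. ip f (G.u j) * G.u j x) = (\<Sum>e\<in>G.u ` J. cc e * e x)" for x
        using fun_cong[OF eq, of x] by simp
      show ?thesis using N by (simp only: eqx)
    qed
    show "\<exists>g\<in>fspan B. ipnorm ip (\<lambda>x. f x - g x) < \<epsilon>"
      by (rule bexI[of _ "\<lambda>x. \<Sum>e\<in>G.u ` J. cc e * e x", OF _ inF]) (use lt in simp)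
  qed
  have onb: "orthonormal_basis H ip B" unfolding orthonormal_basis_def using BH B1 B2 dens by blast
  have "dirichlet_poly_on (halfplane \<rho>) (G.u j)" for j
  proof (rule G.u_closed[where Q="dirichlet_poly_on (halfplane \<rho>)"])
    show "dirichlet_poly_on (halfplane \<rho>) (\<lambda>x. 0)" by (rule dp_zero)
  next
    fix f g :: "complex \<Rightarrow> complex"
    assume "dirichlet_poly_on (halfplane \<rho>) f" "dirichlet_poly_on (halfplane \<rho>) g"
    then show "dirichlet_poly_on (halfplane \<rho>) (\<lambda>x. f x + g x)" by (rule dp_add)
  next
    fix f :: "complex \<Rightarrow> complex" and c :: complex
    assume "dirichlet_poly_on (halfplane \<rho>) f"
    then show "dirichlet_poly_on (halfplane \<rho>) (\<lambda>x. c * f x)" by (rule dp_scale)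
  next
    fix n :: nat
    show "dirichlet_poly_on (halfplane \<rho>) (Ah (Suc n))" by (rule dp_Ah)
  qed
  then have "\<forall>e\<in>B. dirichlet_poly_on (halfplane \<rho>) e" unfolding B_def by blast
  then show ?thesis using onb by blast
qed

end

lemma fspan_H: assumes "rkhs \<Omega> H ip K" "B \<subseteq> H" "g \<in> fspan B" shows "g \<in> H"
proof -
  interpret rk \<Omega> H ip K by (unfold_locales) (rule assms(1))
  obtain S c where "finite S" "S \<subseteq> B" "g = (\<lambda>x. \<Sum>e\<in>S. c e * e x)" using assms(3) unfolding fspan_def by blast
  then show ?thesis using assms(2) sum_H[of S "\<lambda>e. e" c] by auto
qed

lemma fspan_dp: assumes "\<forall>e\<in>B. dirichlet_poly_on \<Omega> e" "g \<in> fspan B" shows "dirichlet_poly_on \<Omega> g"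
proof -
  obtain S c where "finite S" "S \<subseteq> B" "g = (\<lambda>x. \<Sum>e\<in>S. c e * e x)" using assms(2) unfolding fspan_def by blast
  then show ?thesis using assms(1) dp_sum[of S \<Omega> c] by auto
qed

theorem proposition3p1:
  fixes k :: nat and \<rho> :: real and a :: "nat \<Rightarrow> nat \<Rightarrow> complex"
  assumes "dirichlet_series_kernel \<rho> a"
    and "k_diagonal k a"
    and "psd_kernel (halfplane \<rho>) (dkernel a)"
  shows "(\<forall>n\<ge>1. dirichlet_poly_on (halfplane \<rho>) (symbol a n)) \<and>
         (\<forall>H ip. rkhs (halfplane \<rho>) H ip (dkernel a) \<longrightarrow>
            (\<exists>B. orthonormal_basis H ip B \<and> (\<forall>e\<in>B. dirichlet_poly_on (halfplane \<rho>) e)) \<and>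
            ((\<forall>N (c::nat \<Rightarrow> complex).
                (\<lambda>s. if s \<in> halfplane \<rho> then \<Sum>n=1..N. c n * npow n s else 0) \<in> H) \<longrightarrow>
             (\<forall>f\<in>H. \<forall>\<epsilon>>0. \<exists>p\<in>H. dirichlet_poly_on (halfplane \<rho>) p \<and> ipnorm ip (\<lambda>x. f x - p x) < \<epsilon>)))"
proof -
  have P1: "\<forall>n\<ge>1. dirichlet_poly_on (halfplane \<rho>) (symbol a n)"
  proof (intro allI impI)
    fix n :: nat
    have "symbol a n = (\<lambda>s. Am a k n s)" by (rule ext, rule symbol_eq[OF assms(2)])
    then show "dirichlet_poly_on (halfplane \<rho>) (symbol a n)" using dp_Am by simp
  qed
  have P2: "(\<exists>B. orthonormal_basis H ip B \<and> (\<forall>e\<in>B. dirichlet_poly_on (halfplane \<rho>) e)) \<and>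
            ((\<forall>N (c::nat \<Rightarrow> complex).
                (\<lambda>s. if s \<in> halfplane \<rho> then \<Sum>n=1..N. c n * npow n s else 0) \<in> H) \<longrightarrow>
             (\<forall>f\<in>H. \<forall>\<epsilon>>0. \<exists>p\<in>H. dirichlet_poly_on (halfplane \<rho>) p \<and> ipnorm ip (\<lambda>x. f x - p x) < \<epsilon>))"
    if R: "rkhs (halfplane \<rho>) H ip (dkernel a)" for H ip
  proof -
    interpret dk \<rho> H ip a k using R assms(1,2) by (unfold_locales) auto
    obtain B where B: "orthonormal_basis H ip B" "\<forall>e\<in>B. dirichlet_poly_on (halfplane \<rho>) e" using onb by blast
    have "\<forall>f\<in>H. \<forall>\<epsilon>>0. \<exists>p\<in>H. dirichlet_poly_on (halfplane \<rho>) p \<and> ipnorm ip (\<lambda>x. f x - p x) < \<epsilon>"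
    proof (intro ballI allI impI)
      fix f :: "complex \<Rightarrow> complex" and \<epsilon> :: real assume f: "f \<in> H" and e: "\<epsilon> > 0"
      obtain g where g: "g \<in> fspan B" "ipnorm ip (\<lambda>x. f x - g x) < \<epsilon>"
        using B(1) f e unfolding orthonormal_basis_def by blast
      have BH: "B \<subseteq> H" using B(1) unfolding orthonormal_basis_def by blast
      have "g \<in> H" by (rule fspan_H[OF R BH g(1)])
      moreover have "dirichlet_poly_on (halfplane \<rho>) g" using fspan_dp[OF B(2) g(1)] .
      ultimately show "\<exists>p\<in>H. dirichlet_poly_on (halfplane \<rho>) p \<and> ipnorm ip (\<lambda>x. f x - p x) < \<epsilon>" using g(2) by blast
    qed
    then show ?thesis using B by blast
  qed
  show ?thesis using P1 P2 by blast
qed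

end
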